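(* There exist absolute constants $n_0,c>0$ such that for $n\ge n_0$ and $\mu\ge8\sqrt{\log n}$, there exist $\theta^\star_1,\dots,\theta^\star_n\in[-\mu,\mu]$ such that, with $\theta$ a uniformly random permutation of $\theta^\star$, $X\mid\theta\sim\mathcal N(\theta,I_n)$, $\widehat\theta^{\rm S}_i=\mathbb{E}[\theta_i\mid X_i]$ and $\widehat\theta^{\rm PI}_i=\mathbb{E}[\theta_i\mid X]$, $$\mathbb{E}\big[\|\widehat\theta^{\rm S}-\widehat\theta^{\rm PI}\|_2^2\big]\ge c\min\Big\{\frac{\mu}{\sqrt{\log n}},\;n\Big\}.$$
   Context: A uniformly random permutation of $\theta^\star$ means $\theta=(\theta^\star_{\pi(1)},\dots,\theta^\star_{\pi(n)})$ with $\pi$ uniform over permutations of $[n]$. *)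

theory Defs
  imports "HOL-Probability.Probability" "HOL-Probability.Conditional_Expectation"
begin

text \<open>Sample space: pairs (pi, x) with pi a permutation of {..<n} and x in R^n
  (extensional functions on {..<n}).  theta = theta_star o pi, and given pi,
  x has density prod_k N(theta_star (pi k), 1).  pi is uniform over the n! permutations.\<close>

definition perms :: "nat \<Rightarrow> (nat \<Rightarrow> nat) set" where
  "perms n = {p. p permutes {..<n}}"

definition perm_gauss_model :: "nat \<Rightarrow> (nat \<Rightarrow> real) \<Rightarrow> ((nat \<Rightarrow> nat) \<times> (nat \<Rightarrow> real)) measure" where
  "perm_gauss_model n ts =
     density (count_space (perms n) \<Otimes>\<^sub>M PiM {..<n} (\<lambda>_. lborel))
       (\<lambda>(p, x). ennreal ((1 / fact n) * (\<Prod>k<n. normal_density (ts (p k)) 1 (x k))))"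

definition theta_rv :: "(nat \<Rightarrow> real) \<Rightarrow> nat \<Rightarrow> (nat \<Rightarrow> nat) \<times> (nat \<Rightarrow> real) \<Rightarrow> real" where
  "theta_rv ts i \<omega> = ts (fst \<omega> i)"

definition sigma_Xi :: "nat \<Rightarrow> (nat \<Rightarrow> real) \<Rightarrow> nat \<Rightarrow> ((nat \<Rightarrow> nat) \<times> (nat \<Rightarrow> real)) measure" where
  "sigma_Xi n ts i = vimage_algebra (space (perm_gauss_model n ts)) (\<lambda>\<omega>. snd \<omega> i) borel"

definition sigma_X :: "nat \<Rightarrow> (nat \<Rightarrow> real) \<Rightarrow> ((nat \<Rightarrow> nat) \<times> (nat \<Rightarrow> real)) measure" where
  "sigma_X n ts = vimage_algebra (space (perm_gauss_model n ts)) snd (PiM {..<n} (\<lambda>_. borel))"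

definition theta_S :: "nat \<Rightarrow> (nat \<Rightarrow> real) \<Rightarrow> nat \<Rightarrow> (nat \<Rightarrow> nat) \<times> (nat \<Rightarrow> real) \<Rightarrow> real" where
  "theta_S n ts i = real_cond_exp (perm_gauss_model n ts) (sigma_Xi n ts i) (theta_rv ts i)"

definition theta_PI :: "nat \<Rightarrow> (nat \<Rightarrow> real) \<Rightarrow> nat \<Rightarrow> (nat \<Rightarrow> nat) \<times> (nat \<Rightarrow> real) \<Rightarrow> real" where
  "theta_PI n ts i = real_cond_exp (perm_gauss_model n ts) (sigma_X n ts) (theta_rv ts i)"

definition S_PI_gap :: "nat \<Rightarrow> (nat \<Rightarrow> real) \<Rightarrow> real" where
  "S_PI_gap n ts = integral\<^sup>L (perm_gauss_model n ts)
     (\<lambda>\<omega>. \<Sum>i<n. (theta_S n ts i \<omega> - theta_PI n ts i \<omega>)\<^sup>2)"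

end

theory Submission
  imports Defs
begin

abbreviation nd :: "real \<Rightarrow> real \<Rightarrow> real" where "nd a t \<equiv> normal_density a 1 t"

lemma nd_pos: "nd a t > 0" by (simp add: normal_density_def)

lemma finite_perms: "finite (perms n)"
  unfolding perms_def by (rule finite_permutations) simp

lemma card_perms: "card (perms n) = fact n"
  unfolding perms_def by (rule card_permutations) simp_all

lemma nd_meas[measurable]: "(\<lambda>t. nd a t) \<in> borel_measurable borel"
  unfolding normal_density_def by measurable

lemma model_dens_meas:
  "(\<lambda>(p, x). ennreal ((1 / fact n) * (\<Prod>k<n. nd (ts (p k)) (x k))))
     \<in> borel_measurable (count_space (perms n) \<Otimes>\<^sub>M PiM {..<n} (\<lambda>_. lborel))"
  apply (rule measurable_pair_measure_countable1)
   apply (simp add: countable_finite finite_perms)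
  apply simp
  apply measurable
  done

lemma model_nn_integral:
  assumes f[measurable]: "f \<in> borel_measurable (count_space (perms n) \<Otimes>\<^sub>M PiM {..<n} (\<lambda>_. lborel))"
  shows "integral\<^sup>N (perm_gauss_model n ts) f =
    (\<Sum>p\<in>perms n. \<integral>\<^sup>+ x. ennreal (1 / fact n) * ((\<Prod>k<n. ennreal (nd (ts (p k)) (x k))) * f (p, x)) \<partial>PiM {..<n} (\<lambda>_. lborel))"
proof -
  interpret P: product_sigma_finite "\<lambda>_::nat. (lborel::real measure)"
    by (simp add: product_sigma_finite_def sigma_finite_lborel)
  interpret S: sigma_finite_measure "PiM {..<n} (\<lambda>_. lborel::real measure)"
    using P.sigma_finite[of "{..<n}"] by simp
  have "integral\<^sup>N (perm_gauss_model n ts) f =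
     (\<integral>\<^sup>+ y. (\<lambda>(p, x). ennreal ((1 / fact n) * (\<Prod>k<n. nd (ts (p k)) (x k)))) y * f y
        \<partial>(count_space (perms n) \<Otimes>\<^sub>M PiM {..<n} (\<lambda>_. lborel)))"
    unfolding perm_gauss_model_def
    by (rule nn_integral_density[OF model_dens_meas f])
  also have "\<dots> = (\<integral>\<^sup>+ p. \<integral>\<^sup>+ x. ennreal ((1 / fact n) * (\<Prod>k<n. nd (ts (p k)) (x k))) * f (p, x)
        \<partial>PiM {..<n} (\<lambda>_. lborel) \<partial>count_space (perms n))"
    apply (subst S.nn_integral_fst[symmetric])
    using model_dens_meas f apply measurable
    done
  also have "\<dots> = (\<Sum>p\<in>perms n. \<integral>\<^sup>+ x. ennreal ((1 / fact n) * (\<Prod>k<n. nd (ts (p k)) (x k))) * f (p, x)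
        \<partial>PiM {..<n} (\<lambda>_. lborel))"
    by (rule nn_integral_count_space_finite[OF finite_perms])
  also have "\<dots> = (\<Sum>p\<in>perms n. \<integral>\<^sup>+ x. ennreal (1 / fact n) * ((\<Prod>k<n. ennreal (nd (ts (p k)) (x k))) * f (p, x)) \<partial>PiM {..<n} (\<lambda>_. lborel))"
  proof (intro sum.cong nn_integral_cong refl)
    fix p x
    have "(\<Prod>k<n. ennreal (nd (ts (p k)) (x k))) = ennreal (\<Prod>k<n. nd (ts (p k)) (x k))"
      by (rule prod_ennreal) (simp add: normal_density_nonneg)
    moreover have "ennreal ((1 / fact n) * (\<Prod>k<n. nd (ts (p k)) (x k))) = ennreal (1 / fact n) * ennreal (\<Prod>k<n. nd (ts (p k)) (x k))"
      by (rule ennreal_mult) (auto simp: prod_nonneg normal_density_nonneg)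
    ultimately show "ennreal ((1 / fact n) * (\<Prod>k<n. nd (ts (p k)) (x k))) * f (p, x) = ennreal (1 / fact n) * ((\<Prod>k<n. ennreal (nd (ts (p k)) (x k))) * f (p, x))"
      by (simp add: mult.assoc)
  qed
  finally show ?thesis .
qed

lemma prod_lborel_nn:
  assumes [measurable]: "\<And>k. h k \<in> borel_measurable borel"
  shows "(\<integral>\<^sup>+ x. (\<Prod>k<(n::nat). ennreal (nd (a k) (x k)) * h k (x k)) \<partial>PiM {..<n} (\<lambda>_. lborel))
     = (\<Prod>k<n. \<integral>\<^sup>+ t. ennreal (nd (a k) t) * h k t \<partial>lborel)"
proof -
  interpret P: product_sigma_finite "\<lambda>_::nat. (lborel::real measure)"
    by (simp add: product_sigma_finite_def sigma_finite_lborel)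
  show ?thesis
    using P.product_nn_integral_prod[where I="{..<n}" and f="\<lambda>k t. ennreal (nd (a k) t) * h k t"] by auto
qed

lemma nd_nn_1: "(\<integral>\<^sup>+ t. ennreal (nd a t) \<partial>lborel) = 1"
  by (subst nn_integral_eq_integral) auto

lemma nd_shift: "nd a t * exp (l * (t - a)) = exp (l^2/2) * nd (a + l) t"
proof -
  have "exp (-(t - a)\<^sup>2 / (2 * 1\<^sup>2)) * exp (l * (t - a)) = exp (l^2/2) * exp (-(t - (a + l))\<^sup>2 / (2 * 1\<^sup>2))"
    unfolding exp_add[symmetric] by (rule arg_cong[where f=exp]) (simp add: power2_eq_square field_simps)
  then show ?thesis unfolding normal_density_def by (simp add: algebra_simps)
qed

lemma nd_mgf: "(\<integral>\<^sup>+ t. ennreal (nd a t) * ennreal (exp (l * (t - a))) \<partial>lborel) = ennreal (exp (l^2/2))"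
proof -
  have "(\<integral>\<^sup>+ t. ennreal (nd a t) * ennreal (exp (l * (t - a))) \<partial>lborel)
     = (\<integral>\<^sup>+ t. ennreal (exp (l^2/2)) * ennreal (nd (a + l) t) \<partial>lborel)"
    by (intro nn_integral_cong) (simp add: ennreal_mult'[symmetric] nd_shift ennreal_mult[symmetric] normal_density_nonneg)
  also have "\<dots> = ennreal (exp (l^2/2))"
    by (subst nn_integral_cmult) (auto simp: nd_nn_1)
  finally show ?thesis .
qed

lemma nd_mgf_abs:
  assumes "l \<ge> 0"
  shows "(\<integral>\<^sup>+ t. ennreal (nd a t) * ennreal (exp (l * \<bar>t - a\<bar>)) \<partial>lborel) \<le> ennreal (2 * exp (l^2/2))"
proof -
  have "(\<integral>\<^sup>+ t. ennreal (nd a t) * ennreal (exp (l * \<bar>t - a\<bar>)) \<partial>lborel)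
    \<le> (\<integral>\<^sup>+ t. ennreal (nd a t) * ennreal (exp (l * (t - a))) + ennreal (nd a t) * ennreal (exp ((-l) * (t - a))) \<partial>lborel)"
  proof (intro nn_integral_mono)
    fix t
    have "exp (l * \<bar>t - a\<bar>) \<le> exp (l * (t - a)) + exp ((-l) * (t - a))"
    proof (cases "t \<ge> a")
      case True then show ?thesis by (simp add: add_increasing2)
    next
      case False
      then have "l * \<bar>t - a\<bar> = (-l) * (t - a)" by (simp add: algebra_simps)
      then show ?thesis by (simp add: add_increasing)
    qed
    then have "ennreal (exp (l * \<bar>t - a\<bar>)) \<le> ennreal (exp (l * (t - a))) + ennreal (exp ((-l) * (t - a)))"
      by (simp add: ennreal_plus[symmetric] del: ennreal_plus)
    then show "ennreal (nd a t) * ennreal (exp (l * \<bar>t - a\<bar>)) \<le> ennreal (nd a t) * ennreal (exp (l * (t - a))) + ennreal (nd a t) * ennreal (exp ((-l) * (t - a)))"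
      by (simp add: distrib_left[symmetric] mult_left_mono)
  qed
  also have "\<dots> = ennreal (exp (l^2/2)) + ennreal (exp ((-l)^2/2))"
    using nd_mgf[of a "-l"] by (subst nn_integral_add) (auto simp: nd_mgf)
  also have "\<dots> = ennreal (2 * exp (l^2/2))"
    by (simp add: ennreal_plus[symmetric] del: ennreal_plus)
  finally show ?thesis .
qed

lemma prob_space_model: "prob_space (perm_gauss_model n ts)"
proof
  let ?M = "perm_gauss_model n ts"
  have "emeasure ?M (space ?M) = integral\<^sup>N ?M (\<lambda>_. 1)"
    by simp
  also have "\<dots> = (\<Sum>p\<in>perms n. \<integral>\<^sup>+ x. ennreal (1 / fact n) * ((\<Prod>k<n. ennreal (nd (ts (p k)) (x k))) * 1) \<partial>PiM {..<n} (\<lambda>_. lborel))"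
    by (rule model_nn_integral) simp
  also have "\<dots> = (\<Sum>p\<in>perms n. ennreal (1 / fact n))"
  proof (intro sum.cong refl)
    fix p
    have "(\<integral>\<^sup>+ x. ennreal (1 / fact n) * ((\<Prod>k<n. ennreal (nd (ts (p k)) (x k))) * 1) \<partial>PiM {..<n} (\<lambda>_. lborel))
      = ennreal (1 / fact n) * (\<integral>\<^sup>+ x. (\<Prod>k<n. ennreal (nd (ts (p k)) (x k)) * 1) \<partial>PiM {..<n} (\<lambda>_. lborel))"
      by (subst nn_integral_cmult) auto
    also have "\<dots> = ennreal (1 / fact n)"
      by (subst prod_lborel_nn) (auto simp: nd_nn_1)
    finally show "(\<integral>\<^sup>+ x. ennreal (1 / fact n) * ((\<Prod>k<n. ennreal (nd (ts (p k)) (x k))) * 1) \<partial>PiM {..<n} (\<lambda>_. lborel)) = ennreal (1 / fact n)" .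
  qed
  also have "\<dots> = of_nat (card (perms n)) * ennreal (1 / fact n)"
    by simp
  also have "\<dots> = ennreal (real (card (perms n)) * (1 / fact n))"
    by (simp add: ennreal_of_nat_eq_real_of_nat ennreal_mult[symmetric])
  also have "\<dots> = 1"
    by (simp add: card_perms)
  finally show "emeasure ?M (space ?M) = 1" .
qed

lemma sq_diff_bound:
  fixes a b :: real
  assumes "\<bar>a\<bar> \<le> B" "\<bar>b\<bar> \<le> K"
  shows "norm ((a - b)^2) \<le> (B + K)^2"
proof -
  have "\<bar>a - b\<bar> \<le> B + K" using assms by linarith
  then show ?thesis by (simp add: abs_le_square_iff[symmetric])
qed

lemma pyth:
  assumes sf: "sigma_finite_subalgebra M F" and ps: "prob_space M"
    and f[measurable]: "f \<in> borel_measurable M" and fb: "\<And>x. x \<in> space M \<Longrightarrow> \<bar>f x\<bar> \<le> B"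
    and W[measurable]: "W \<in> borel_measurable F" and Wb: "AE x in M. \<bar>W x\<bar> \<le> K"
  shows "(\<integral>x. (f x - W x)^2 \<partial>M) = (\<integral>x. (f x - real_cond_exp M F f x)^2 \<partial>M) + (\<integral>x. (real_cond_exp M F f x - W x)^2 \<partial>M)"
    "integrable M (\<lambda>x. (real_cond_exp M F f x - W x)^2)"
    "integrable M (\<lambda>x. (f x - real_cond_exp M F f x)^2)"
proof -
  interpret sigma_finite_subalgebra M F by (rule sf)
  interpret prob_space M by (rule ps)
  let ?Y = "real_cond_exp M F f"
  have Wm[measurable]: "W \<in> borel_measurable M"
    using W measurable_from_subalg[OF subalg] by blast
  have fi: "integrable M f"
    by (rule integrable_const_bound[where B=B]) (auto simp: fb)
  have Yb1: "AE x in M. ?Y x \<le> B"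
    by (rule real_cond_exp_le_c[OF fi]) (auto intro!: AE_I2 dest: fb)
  have Yb2: "AE x in M. ?Y x \<ge> -B"
    by (rule real_cond_exp_ge_c[OF fi]) (auto intro!: AE_I2 dest: fb)
  have Yb: "AE x in M. \<bar>?Y x\<bar> \<le> B" using Yb1 Yb2 by auto
  have fbA: "AE x in M. \<bar>f x\<bar> \<le> B" by (auto intro!: AE_I2 fb)
  have Ym[measurable]: "?Y \<in> borel_measurable M" by simp
  have i1: "integrable M (\<lambda>x. (f x - ?Y x)^2)"
    apply (rule integrable_const_bound[where B="(B + B)^2"])
    using Yb fbA apply eventually_elim
     apply (rule sq_diff_bound) apply auto
    done
  have i2: "integrable M (\<lambda>x. (?Y x - W x)^2)"
    apply (rule integrable_const_bound[where B="(B + K)^2"])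
    using Yb Wb apply eventually_elim
     apply (rule sq_diff_bound) apply auto
    done
  have i3: "integrable M (\<lambda>x. (?Y x - W x) * f x)"
    apply (rule integrable_const_bound[where B="(B + K) * B"])
    using Yb Wb fbA apply eventually_elim
     apply (simp add: abs_mult)
     apply (rule mult_mono) apply (rule order_trans[OF abs_triangle_ineq4]) apply (intro add_mono)
    apply auto
    done
  have YWF[measurable]: "(\<lambda>x. ?Y x - W x) \<in> borel_measurable F" by measurable
  have cross: "(\<integral>x. (?Y x - W x) * ?Y x \<partial>M) = (\<integral>x. (?Y x - W x) * f x \<partial>M)"
    and i4: "integrable M (\<lambda>x. (?Y x - W x) * ?Y x)"
    using real_cond_exp_intg[OF i3 YWF f] by auto
  have "(\<integral>x. (f x - W x)^2 \<partial>M) = (\<integral>x. (f x - ?Y x)^2 + (?Y x - W x)^2 + 2 * ((?Y x - W x) * f x - (?Y x - W x) * ?Y x) \<partial>M)"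
    by (rule Bochner_Integration.integral_cong) (simp_all add: power2_eq_square algebra_simps)
  also have "\<dots> = (\<integral>x. (f x - ?Y x)^2 \<partial>M) + (\<integral>x. (?Y x - W x)^2 \<partial>M) + 2 * ((\<integral>x. (?Y x - W x) * f x \<partial>M) - (\<integral>x. (?Y x - W x) * ?Y x \<partial>M))"
    using i1 i2 i3 i4 by simp
  also have "\<dots> = (\<integral>x. (f x - ?Y x)^2 \<partial>M) + (\<integral>x. (?Y x - W x)^2 \<partial>M)"
    using cross by simp
  finally show "(\<integral>x. (f x - W x)^2 \<partial>M) = (\<integral>x. (f x - ?Y x)^2 \<partial>M) + (\<integral>x. (?Y x - W x)^2 \<partial>M)" .
  show "integrable M (\<lambda>x. (?Y x - W x)^2)" by (rule i2)
  show "integrable M (\<lambda>x. (f x - ?Y x)^2)" by (rule i1)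
qed

lemma space_model: "space (perm_gauss_model n ts) = perms n \<times> space (PiM {..<n} (\<lambda>_. lborel::real measure))"
  unfolding perm_gauss_model_def by (simp add: space_pair_measure)

lemma sets_model[measurable_cong]: "sets (perm_gauss_model n ts) = sets (count_space (perms n) \<Otimes>\<^sub>M PiM {..<n} (\<lambda>_. lborel::real measure))"
  unfolding perm_gauss_model_def by simp

lemma meas_model_iff: "f \<in> perm_gauss_model n ts \<rightarrow>\<^sub>M N \<longleftrightarrow> f \<in> (count_space (perms n) \<Otimes>\<^sub>M PiM {..<n} (\<lambda>_. lborel::real measure)) \<rightarrow>\<^sub>M N"
  by (subst measurable_cong_sets[OF sets_model[of n ts] refl]) (rule refl)

lemma snd_meas: "snd \<in> perm_gauss_model n ts \<rightarrow>\<^sub>M PiM {..<n} (\<lambda>_. borel::real measure)"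
proof -
  have "snd \<in> (count_space (perms n) \<Otimes>\<^sub>M PiM {..<n} (\<lambda>_. lborel::real measure)) \<rightarrow>\<^sub>M PiM {..<n} (\<lambda>_. lborel::real measure)"
    by measurable
  moreover have "sets (PiM {..<n} (\<lambda>_. lborel::real measure)) = sets (PiM {..<n} (\<lambda>_. borel::real measure))"
    by (rule sets_PiM_cong) auto
  ultimately show ?thesis
    unfolding meas_model_iff using measurable_cong_sets[OF refl] by metis
qed

lemma Xi_meas: "i < n \<Longrightarrow> (\<lambda>\<omega>. snd \<omega> i) \<in> borel_measurable (perm_gauss_model n ts)"
  using measurable_compose[OF snd_meas measurable_component_singleton[of i "{..<n}" "\<lambda>_. borel::real measure"]]
  by simp

lemma subalg_vimage:
  assumes "f \<in> M \<rightarrow>\<^sub>M N"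
  shows "subalgebra M (vimage_algebra (space M) f N)"
  unfolding subalgebra_def
proof
  show "space (vimage_algebra (space M) f N) = space M" by simp
  have "f \<in> space M \<rightarrow> space N" using measurable_space[OF assms] by (auto simp: Pi_iff)
  then show "sets (vimage_algebra (space M) f N) \<subseteq> sets M"
    using assms by (auto simp: sets_vimage_algebra2 intro: measurable_sets[OF assms])
qed

lemma sfs_vimage:
  assumes "prob_space M" "f \<in> M \<rightarrow>\<^sub>M N"
  shows "sigma_finite_subalgebra M (vimage_algebra (space M) f N)"
proof -
  interpret prob_space M by fact
  have "finite_measure_subalgebra M (vimage_algebra (space M) f N)"
    by unfold_locales (rule subalg_vimage[OF assms(2)])
  then show ?thesis by (rule finite_measure_subalgebra_is_sigma_finite)
qed

lemma sfs_X: "sigma_finite_subalgebra (perm_gauss_model n ts) (sigma_X n ts)"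
  unfolding sigma_X_def by (rule sfs_vimage[OF prob_space_model snd_meas])

lemma sfs_Xi: "i < n \<Longrightarrow> sigma_finite_subalgebra (perm_gauss_model n ts) (sigma_Xi n ts i)"
  unfolding sigma_Xi_def by (rule sfs_vimage[OF prob_space_model Xi_meas])

lemma theta_meas[measurable]: "theta_rv ts i \<in> borel_measurable (perm_gauss_model n ts)"
proof -
  have "(\<lambda>\<omega>. ts (fst \<omega> i)) \<in> borel_measurable (count_space (perms n) \<Otimes>\<^sub>M PiM {..<n} (\<lambda>_. lborel::real measure))"
    by (rule measurable_pair_measure_countable1) (auto simp: countable_finite finite_perms)
  then show ?thesis unfolding meas_model_iff theta_rv_def .
qed

lemma theta_bound:
  assumes "\<forall>a<n. ts a \<in> {-\<mu>..\<mu>}" "i < n" "\<omega> \<in> space (perm_gauss_model n ts)"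
  shows "\<bar>theta_rv ts i \<omega>\<bar> \<le> \<mu>"
proof -
  have "fst \<omega> permutes {..<n}" using assms(3) by (auto simp: space_model perms_def)
  then have "fst \<omega> i < n" using assms(2) by (metis lessThan_iff permutes_in_image)
  then show ?thesis using assms(1) unfolding theta_rv_def by auto
qed

lemma Xi_factor:
  fixes g :: "(nat \<Rightarrow> nat) \<times> (nat \<Rightarrow> real) \<Rightarrow> real"
  assumes g: "g \<in> borel_measurable (sigma_Xi n ts i)" and i: "i < n"
    and w: "\<omega> \<in> space (perm_gauss_model n ts)" "\<omega>' \<in> space (perm_gauss_model n ts)"
    and eq: "snd \<omega> i = snd \<omega>' i"
  shows "g \<omega> = g \<omega>'"
proof -
  let ?M = "perm_gauss_model n ts"
  have Xs: "(\<lambda>\<omega>. snd \<omega> i) \<in> space ?M \<rightarrow> space (borel::real measure)" by simp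
  have "g -` {g \<omega>} \<inter> space (sigma_Xi n ts i) \<in> sets (sigma_Xi n ts i)"
    by (rule measurable_sets[OF g]) (rule borel_closed, simp)
  then obtain A where A: "g -` {g \<omega>} \<inter> space ?M = (\<lambda>\<omega>. snd \<omega> i) -` A \<inter> space ?M"
    unfolding sigma_Xi_def sets_vimage_algebra2[OF Xs] by auto
  have "\<omega> \<in> (\<lambda>\<omega>. snd \<omega> i) -` A \<inter> space ?M" using A w by blast
  then have "\<omega>' \<in> (\<lambda>\<omega>. snd \<omega> i) -` A \<inter> space ?M" using w eq by simp
  then have "\<omega>' \<in> g -` {g \<omega>} \<inter> space ?M" using A by simp
  then show ?thesis by simp
qed

definition emb :: "nat \<Rightarrow> nat \<Rightarrow> real \<Rightarrow> (nat \<Rightarrow> nat) \<times> (nat \<Rightarrow> real)" where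
  "emb n i t = (id, (restrict (\<lambda>_. 0) ({..<n} - {i}))(i := t))"

lemma emb_space: "i < n \<Longrightarrow> emb n i t \<in> space (perm_gauss_model n ts)"
  by (auto simp: emb_def space_model perms_def space_PiM PiE_def extensional_def split: if_splits)

lemma emb_meas: "i < n \<Longrightarrow> emb n i \<in> lborel \<rightarrow>\<^sub>M perm_gauss_model n ts"
proof -
  assume i: "i < n"
  have ins: "insert i ({..<n} - {i}) = {..<n}" using i by auto
  have "(\<lambda>t. (restrict (\<lambda>_. 0) ({..<n} - {i}))(i := t)) \<in> lborel \<rightarrow>\<^sub>M PiM (insert i ({..<n} - {i})) (\<lambda>_. lborel::real measure)"
    using measurable_component_update[where x="restrict (\<lambda>_. 0) ({..<n} - {i})" and I="{..<n} - {i}" and M="\<lambda>_. lborel::real measure" and i=i]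
    by (simp add: space_PiM)
  then have u: "(\<lambda>t. (restrict (\<lambda>_. 0) ({..<n} - {i}))(i := t)) \<in> lborel \<rightarrow>\<^sub>M PiM {..<n} (\<lambda>_. lborel::real measure)"
    unfolding ins .
  have "(\<lambda>t. (id, (restrict (\<lambda>_. 0) ({..<n} - {i}))(i := t))) \<in> lborel \<rightarrow>\<^sub>M (count_space (perms n) \<Otimes>\<^sub>M PiM {..<n} (\<lambda>_. lborel::real measure))"
    by (intro measurable_Pair u measurable_const) (simp add: perms_def permutes_id)
  then show ?thesis unfolding emb_def measurable_cong_sets[OF refl sets_model[of n ts]] .
qed

lemma Xi_represent:
  fixes g :: "(nat \<Rightarrow> nat) \<times> (nat \<Rightarrow> real) \<Rightarrow> real"
  assumes g: "g \<in> borel_measurable (sigma_Xi n ts i)" and i: "i < n"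
  shows "(\<lambda>t. g (emb n i t)) \<in> borel_measurable borel"
    and "\<And>\<omega>. \<omega> \<in> space (perm_gauss_model n ts) \<Longrightarrow> g \<omega> = g (emb n i (snd \<omega> i))"
proof -
  have gM: "g \<in> borel_measurable (perm_gauss_model n ts)"
    using g measurable_from_subalg[OF sigma_finite_subalgebra.subalg[OF sfs_Xi[OF i]]] by blast
  have "(\<lambda>t. g (emb n i t)) \<in> borel_measurable lborel"
    using measurable_compose[OF emb_meas[OF i] gM] by (simp add: comp_def)
  then show "(\<lambda>t. g (emb n i t)) \<in> borel_measurable borel"
    by (simp add: measurable_lborel1)
  fix \<omega> assume w: "\<omega> \<in> space (perm_gauss_model n ts)"
  show "g \<omega> = g (emb n i (snd \<omega> i))"
    by (rule Xi_factor[OF g i w emb_space[OF i]]) (simp add: emb_def)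
qed

lemma thetaS_measX:
  assumes i: "i < n"
  shows "theta_S n ts i \<in> borel_measurable (sigma_X n ts)"
proof -
  let ?M = "perm_gauss_model n ts"
  have g: "theta_S n ts i \<in> borel_measurable (sigma_Xi n ts i)"
    unfolding theta_S_def by simp
  note R = Xi_represent[OF g i]
  have sX: "snd \<in> sigma_X n ts \<rightarrow>\<^sub>M PiM {..<n} (\<lambda>_. borel::real measure)"
    unfolding sigma_X_def
    by (rule measurable_vimage_algebra1) (use measurable_space[OF snd_meas] in blast)
  have "(\<lambda>\<omega>. theta_S n ts i (emb n i (snd \<omega> i))) \<in> borel_measurable (sigma_X n ts)"
    using measurable_compose[OF measurable_compose[OF sX measurable_component_singleton[of i "{..<n}" "\<lambda>_. borel::real measure"]] R(1)] i
    by (simp add: comp_def)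
  then show ?thesis
    by (rule measurable_cong[THEN iffD1, rotated]) (auto simp: sigma_X_def R(2))
qed

locale design =
  fixes n m :: nat and \<mu> s :: real
  assumes m2n: "2 * m \<le> n" and s16: "s \<ge> 16" and fit: "real m * s + 8 \<le> 2 * \<mu>"
begin

definition c :: "nat \<Rightarrow> real" where "c k = -\<mu> + 4 + real k * s"
definition r :: real where "r = s / 2 - 4"
definition cl :: "nat \<Rightarrow> nat" where "cl a = (if a < 2 * m then a div 2 + 1 else 0)"
definition off :: "nat \<Rightarrow> real" where "off a = (if a < 2 * m then (if even a then 4 else -4) else 0)"
definition tsd :: "nat \<Rightarrow> real" where "tsd a = c (cl a) + off a"
definition tau :: "nat \<Rightarrow> nat" where "tau a = (if a < 2 * m then (if even a then a + 1 else a - 1) else a)"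
definition win :: "nat \<Rightarrow> real \<Rightarrow> bool" where "win k t = (\<bar>t - c k\<bar> < s / 2)"
definition clip :: "real \<Rightarrow> real" where "clip t = max (-\<mu>) (min \<mu> t)"
definition val :: "nat \<Rightarrow> nat \<Rightarrow> (nat \<Rightarrow> real) \<Rightarrow> real" where
  "val i k x = (if k = 0 then c 0 else c k + 4 * sgn (\<Sum>j\<in>{..<n} - {i}. if win k (x j) then x i - x j else 0))"
definition Gx :: "nat \<Rightarrow> (nat \<Rightarrow> real) \<Rightarrow> real" where
  "Gx i x = (\<Sum>k\<le>m. if win k (x i) then val i k x else 0) + (if (\<forall>k\<le>m. \<not> win k (x i)) then clip (x i) else 0)"

lemma mu_ge: "\<mu> \<ge> 4" using fit s16 by (smt (verit) of_nat_0_le_iff mult_nonneg_nonneg)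

lemma c_diff: "k \<noteq> k' \<Longrightarrow> \<bar>c k - c k'\<bar> \<ge> s"
proof -
  assume "k \<noteq> k'"
  then have "\<bar>real k - real k'\<bar> \<ge> 1" by (cases "k < k'") auto
  moreover have "c k - c k' = (real k - real k') * s" by (simp add: c_def algebra_simps)
  ultimately show ?thesis using s16 by (simp add: abs_mult)
qed

lemma win_unique: "win k t \<Longrightarrow> win k' t \<Longrightarrow> k = k'"
  using c_diff[of k k'] unfolding win_def by (cases "k = k'") (auto, smt (verit))

lemma sum_single:
  assumes "finite A" "a \<in> A" "\<And>b. b \<in> A \<Longrightarrow> b \<noteq> a \<Longrightarrow> f b = (0::real)"
  shows "sum f A = f a"
proof -
  have "sum f A = f a + sum f (A - {a})" using assms by (simp add: sum.remove)
  also have "sum f (A - {a}) = 0" using assms by (intro sum.neutral) auto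
  finally show ?thesis by simp
qed

lemma Gx_win:
  assumes "k \<le> m" "win k (x i)"
  shows "Gx i x = val i k x"
proof -
  have "(\<Sum>k'\<le>m. if win k' (x i) then val i k' x else 0) = (if win k (x i) then val i k x else 0)"
    by (rule sum_single) (use assms win_unique in auto)
  then have eq1: "(\<Sum>k'\<le>m. if win k' (x i) then val i k' x else 0) = val i k x" using assms by simp
  have nw: "\<not> (\<forall>k\<le>m. \<not> win k (x i))" using assms by auto
  show ?thesis unfolding Gx_def eq1 if_not_P[OF nw] by simp
qed

lemma Gx_nowin:
  assumes "\<forall>k\<le>m. \<not> win k (x i)"
  shows "Gx i x = clip (x i)"
  using assms by (simp add: Gx_def)

lemma val_bound: "\<bar>val i k x - c k\<bar> \<le> 4"
  by (auto simp: val_def sgn_if abs_mult)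

lemma cl_le: "cl a \<le> m"
  by (auto simp: cl_def)

lemma tsd_c: "\<bar>tsd a - c (cl a)\<bar> \<le> 4"
  by (simp add: tsd_def off_def)

lemma tsd_range: "tsd a \<in> {-\<mu>..\<mu>}"
proof -
  have s0: "s \<ge> 0" using s16 by simp
  show ?thesis
  proof (cases "a < 2 * m")
    case True
    then have k1: "cl a \<ge> 1" by (simp add: cl_def)
    have "real (cl a) * s \<le> real m * s" using cl_le s0 by (simp add: mult_right_mono)
    moreover have "real (cl a) * s \<ge> 1 * s" using k1 s0 by (intro mult_right_mono) auto
    ultimately show ?thesis using True fit s0 by (auto simp: tsd_def off_def c_def)
  next
    case False
    then show ?thesis using mu_ge by (simp add: tsd_def off_def c_def cl_def)
  qed
qed

lemma tau_lt: "a < n \<Longrightarrow> tau a < n"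
  using m2n by (auto simp: tau_def)

lemma tau_tau: "tau (tau a) = a"
  by (auto simp: tau_def)

lemma tau_neq: "a < 2 * m \<Longrightarrow> tau a \<noteq> a"
  by (auto simp: tau_def) presburger

lemma tau_lt2m: "a < 2 * m \<Longrightarrow> tau a < 2 * m"
  by (auto simp: tau_def)

lemma cl_tau: "cl (tau a) = cl a"
  by (auto simp: tau_def cl_def) presburger

lemma off_tau: "a < 2 * m \<Longrightarrow> off (tau a) = - off a"
  by (auto simp: tau_def off_def)

lemma pair_cl:
  assumes "cl a = cl b" "cl a \<noteq> 0"
  shows "b = a \<or> b = tau a"
  using assms by (auto simp: cl_def tau_def split: if_splits) presburger+

lemma tau_permutes: "tau permutes {..<n}"
proof (rule bij_imp_permutes)
  show "bij_betw tau {..<n} {..<n}"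
    by (rule bij_betw_byWitness[where f'=tau]) (auto simp: tau_tau tau_lt)
  show "\<And>x. x \<notin> {..<n} \<Longrightarrow> tau x = x" using m2n by (auto simp: tau_def)
qed

lemma sq_le_abs: "\<bar>t::real\<bar> \<le> b \<Longrightarrow> t^2 \<le> b^2"
  by (metis abs_ge_zero order_trans power2_abs power_mono)

lemma good_win:
  assumes "\<bar>x - tsd a\<bar> < r"
  shows "win (cl a) x"
  using assms tsd_c[of a] unfolding win_def r_def by linarith

lemma clip_close: "t \<in> {-\<mu>..\<mu>} \<Longrightarrow> \<bar>t - clip y\<bar> \<le> \<bar>t - y\<bar>"
  by (auto simp: clip_def)

lemma pointwise1:
  assumes p: "p permutes {..<n}" and i: "i < n"
  shows "\<bar>tsd (p i) - Gx i x\<bar> \<le> 2 * \<bar>x i - tsd (p i)\<bar> + 8"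
proof (cases "\<exists>k\<le>m. win k (x i)")
  case True
  then obtain k where k: "k \<le> m" "win k (x i)" by auto
  have G: "Gx i x = val i k x" by (rule Gx_win[where x=x and i=i, OF k])
  have vb: "\<bar>val i k x - c k\<bar> \<le> 4" by (rule val_bound)
  have tc: "\<bar>tsd (p i) - c (cl (p i))\<bar> \<le> 4" by (rule tsd_c)
  show ?thesis
  proof (cases "k = cl (p i)")
    case True
    then show ?thesis using G vb tc by (smt (verit))
  next
    case False
    then have "\<bar>c k - c (cl (p i))\<bar> \<ge> s" by (rule c_diff)
    have h1: "\<bar>tsd (p i) - Gx i x\<bar> \<le> \<bar>tsd (p i) - x i\<bar> + \<bar>x i - c k\<bar> + \<bar>c k - Gx i x\<bar>" by arith
    have h2: "\<bar>c k - c (cl (p i))\<bar> \<le> \<bar>x i - c k\<bar> + \<bar>tsd (p i) - x i\<bar> + \<bar>tsd (p i) - c (cl (p i))\<bar>" by arith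
    have h3: "\<bar>c k - Gx i x\<bar> \<le> 4" using G vb by arith
    have h4: "\<bar>tsd (p i) - x i\<bar> = \<bar>x i - tsd (p i)\<bar>" by arith
    show ?thesis using h1 h2 h3 h4 tc k(2) \<open>\<bar>c k - c (cl (p i))\<bar> \<ge> s\<close> unfolding win_def by linarith
  qed
next
  case False
  then have G: "Gx i x = clip (x i)" by (intro Gx_nowin) auto
  have "\<bar>tsd (p i) - x i\<bar> = \<bar>x i - tsd (p i)\<bar>" by (rule abs_minus_commute)
  moreover have "\<And>A B C::real. A \<le> B \<Longrightarrow> B = C \<Longrightarrow> 0 \<le> C \<Longrightarrow> A \<le> 2*C + 8" by linarith
  ultimately show ?thesis unfolding G using clip_close[OF tsd_range[of "p i"], of "x i"] abs_ge_zero[of "x i - tsd (p i)"] by metis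
qed

lemma pointwise2:
  assumes p: "p permutes {..<n}" and i: "i < n"
    and good: "\<forall>l<n. \<bar>x l - tsd (p l)\<bar> < r"
  shows "(tsd (p i) - Gx i x)^2 \<le> (if p i < 2*m then (if even (p i)
      then (if x (inv p (tau (p i))) - tsd (p (inv p (tau (p i)))) - (x i - tsd (p i)) \<ge> 8 then 64 else 0)
      else (if (x i - tsd (p i)) - (x (inv p (tau (p i))) - tsd (p (inv p (tau (p i))))) \<ge> 8 then 64 else 0)) else 0)"
proof -
  define a where "a = p i"
  define k0 where "k0 = cl a"
  have an: "a < n" using p i unfolding a_def by (metis lessThan_iff permutes_in_image)
  have w0: "win k0 (x i)" unfolding k0_def a_def by (rule good_win) (use good i in auto)
  have G: "Gx i x = val i k0 x" by (rule Gx_win[where x=x and i=i, OF _ w0]) (simp add: k0_def cl_le)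
  show ?thesis
  proof (cases "a < 2 * m")
    case False
    then have "k0 = 0" by (simp add: k0_def cl_def)
    then have "Gx i x = tsd a" using False G by (simp add: val_def tsd_def off_def cl_def)
    then show ?thesis using False by (simp add: a_def)
  next
    case True
    have k0pos: "k0 \<noteq> 0" using True by (simp add: k0_def cl_def)
    define jj where "jj = inv p (tau a)"
    have pjj: "p jj = tau a" unfolding jj_def by (rule permutes_inverses(1)[OF p])
    have taun: "tau a < n" using an by (rule tau_lt)
    have jjn: "jj < n"
      using permutes_in_image[OF permutes_inv[OF p], of "tau a"] taun by (simp add: jj_def)
    have jji: "jj \<noteq> i" using pjj tau_neq[OF True] by (auto simp: a_def)
    have winj: "win k0 (x j) \<longleftrightarrow> j = jj" if j: "j \<in> {..<n} - {i}" for j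
    proof
      assume wj: "win k0 (x j)"
      have "win (cl (p j)) (x j)" by (rule good_win) (use good j in auto)
      then have "cl (p j) = k0" using wj win_unique by blast
      then have "p j = a \<or> p j = tau a" using pair_cl[of a "p j"] k0pos by (auto simp: k0_def)
      moreover have "p j \<noteq> a" using j permutes_inj[OF p] by (auto simp: a_def inj_def)
      ultimately have "p j = p jj" using pjj by simp
      then show "j = jj" using permutes_inj[OF p] by (auto simp: inj_def)
    next
      assume "j = jj"
      moreover have "win (cl (p jj)) (x jj)" by (rule good_win) (use good jjn in auto)
      ultimately show "win k0 (x j)" using pjj cl_tau by (simp add: k0_def)
    qed
    have sumeq: "(\<Sum>j\<in>{..<n} - {i}. if win k0 (x j) then x i - x j else 0) = x i - x jj"
    proof -
      have "(\<Sum>j\<in>{..<n} - {i}. if win k0 (x j) then x i - x j else 0) = (if win k0 (x jj) then x i - x jj else 0)"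
        by (rule sum_single) (use winj jjn jji in auto)
      then show ?thesis using winj jjn jji by simp
    qed
    have vk: "val i k0 x = c k0 + 4 * sgn (x i - x jj)"
      using k0pos sumeq by (simp add: val_def)
    have tsa: "tsd a = c k0 + off a" by (simp add: tsd_def k0_def)
    have tsj: "tsd (p jj) = c k0 - off a" using pjj cl_tau off_tau[OF True] by (simp add: tsd_def k0_def)
    show ?thesis
    proof (cases "even a")
      case True': True
      have oa: "off a = 4" using True True' by (simp add: off_def)
      show ?thesis
      proof (cases "x jj - tsd (p jj) - (x i - tsd (p i)) \<ge> 8")
        case True2: True
        have "\<bar>tsd (p i) - Gx i x\<bar> \<le> 8" using G vk tsa oa by (auto simp: a_def sgn_if)
        then have "(tsd (p i) - Gx i x)^2 \<le> 8^2" by (rule sq_le_abs)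
        then show ?thesis using True True' True2 by (simp add: a_def jj_def)
      next
        case False2: False
        have "x i - x jj > 0" using False2 tsa tsj oa by (simp add: a_def)
        then have "Gx i x = tsd (p i)" using G vk tsa oa by (simp add: a_def)
        then show ?thesis by simp
      qed
    next
      case False': False
      have oa: "off a = -4" using True False' by (simp add: off_def)
      show ?thesis
      proof (cases "(x i - tsd (p i)) - (x jj - tsd (p jj)) \<ge> 8")
        case True2: True
        have "\<bar>tsd (p i) - Gx i x\<bar> \<le> 8" using G vk tsa oa by (auto simp: a_def sgn_if)
        then have "(tsd (p i) - Gx i x)^2 \<le> 8^2" by (rule sq_le_abs)
        then show ?thesis using True False' True2 by (simp add: a_def jj_def)
      next
        case False2: False
        have "x i - x jj < 0" using False2 tsa tsj oa by (simp add: a_def)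
        then have "Gx i x = tsd (p i)" using G vk tsa oa by (simp add: a_def)
        then show ?thesis by simp
      qed
    qed
  qed
qed

end

lemma prod_two:
  fixes F :: "nat \<Rightarrow> 'a::comm_monoid_mult"
  assumes "finite A" "i \<in> A" "j \<in> A" "i \<noteq> j" "\<And>k. k \<in> A \<Longrightarrow> k \<noteq> i \<Longrightarrow> k \<noteq> j \<Longrightarrow> F k = 1"
  shows "prod F A = F i * F j"
proof -
  have "prod F A = F i * prod F (A - {i})" using assms by (simp add: prod.remove)
  also have "prod F (A - {i}) = F j * prod F (A - {i} - {j})"
    using prod.remove[of "A - {i}" j F] assms by simp
  also have "prod F (A - {i} - {j}) = 1" using assms by (intro prod.neutral) auto
  finally show ?thesis by simp
qed

lemma prod_one:
  fixes F :: "nat \<Rightarrow> 'a::comm_monoid_mult"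
  assumes "finite A" "i \<in> A" "\<And>k. k \<in> A \<Longrightarrow> k \<noteq> i \<Longrightarrow> F k = 1"
  shows "prod F A = F i"
proof -
  have "prod F A = F i * prod F (A - {i})" using assms by (simp add: prod.remove)
  also have "prod F (A - {i}) = 1" using assms by (intro prod.neutral) auto
  finally show ?thesis by simp
qed

lemma pair_int:
  assumes ij: "i < (n::nat)" "j < n" "i \<noteq> j"
    and [measurable]: "u \<in> borel_measurable borel" "v \<in> borel_measurable borel"
  shows "(\<integral>\<^sup>+ x. (\<Prod>k<n. ennreal (nd (a k) (x k))) * (u (x i) * v (x j)) \<partial>PiM {..<n} (\<lambda>_. lborel))
    = (\<integral>\<^sup>+ t. ennreal (nd (a i) t) * u t \<partial>lborel) * (\<integral>\<^sup>+ t. ennreal (nd (a j) t) * v t \<partial>lborel)"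
proof -
  define h where "h k = (if k = i then u else if k = j then v else (\<lambda>_. 1))" for k
  have hm: "\<And>k. h k \<in> borel_measurable borel" by (simp add: h_def)
  have "(\<integral>\<^sup>+ x. (\<Prod>k<n. ennreal (nd (a k) (x k))) * (u (x i) * v (x j)) \<partial>PiM {..<n} (\<lambda>_. lborel))
      = (\<integral>\<^sup>+ x. (\<Prod>k<n. ennreal (nd (a k) (x k)) * h k (x k)) \<partial>PiM {..<n} (\<lambda>_. lborel))"
  proof (intro nn_integral_cong)
    fix x
    have "(\<Prod>k<n. h k (x k)) = h i (x i) * h j (x j)"
      by (rule prod_two[where F="\<lambda>k. h k (x k)"]) (use ij in \<open>auto simp: h_def\<close>)
    then show "(\<Prod>k<n. ennreal (nd (a k) (x k))) * (u (x i) * v (x j)) = (\<Prod>k<n. ennreal (nd (a k) (x k)) * h k (x k))"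
      using ij by (simp add: prod.distrib h_def)
  qed
  also have "\<dots> = (\<Prod>k<n. \<integral>\<^sup>+ t. ennreal (nd (a k) t) * h k t \<partial>lborel)"
    by (rule prod_lborel_nn[OF hm])
  also have "\<dots> = (\<integral>\<^sup>+ t. ennreal (nd (a i) t) * h i t \<partial>lborel) * (\<integral>\<^sup>+ t. ennreal (nd (a j) t) * h j t \<partial>lborel)"
    by (rule prod_two[where F="\<lambda>k. \<integral>\<^sup>+ t. ennreal (nd (a k) t) * h k t \<partial>lborel"]) (use ij in \<open>auto simp: h_def nd_nn_1\<close>)
  finally show ?thesis using ij by (simp add: h_def)
qed

lemma single_int:
  assumes i: "i < (n::nat)" and [measurable]: "u \<in> borel_measurable borel"
  shows "(\<integral>\<^sup>+ x. (\<Prod>k<n. ennreal (nd (a k) (x k))) * u (x i) \<partial>PiM {..<n} (\<lambda>_. lborel))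
    = (\<integral>\<^sup>+ t. ennreal (nd (a i) t) * u t \<partial>lborel)"
proof -
  define h where "h k = (if k = i then u else (\<lambda>_. 1))" for k
  have hm: "\<And>k. h k \<in> borel_measurable borel" by (simp add: h_def)
  have "(\<integral>\<^sup>+ x. (\<Prod>k<n. ennreal (nd (a k) (x k))) * u (x i) \<partial>PiM {..<n} (\<lambda>_. lborel))
      = (\<integral>\<^sup>+ x. (\<Prod>k<n. ennreal (nd (a k) (x k)) * h k (x k)) \<partial>PiM {..<n} (\<lambda>_. lborel))"
  proof (intro nn_integral_cong)
    fix x
    have "(\<Prod>k<n. h k (x k)) = h i (x i)"
      by (rule prod_one[where F="\<lambda>k. h k (x k)"]) (use i in \<open>auto simp: h_def\<close>)
    then show "(\<Prod>k<n. ennreal (nd (a k) (x k))) * u (x i) = (\<Prod>k<n. ennreal (nd (a k) (x k)) * h k (x k))"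
      by (simp add: prod.distrib h_def)
  qed
  also have "\<dots> = (\<Prod>k<n. \<integral>\<^sup>+ t. ennreal (nd (a k) t) * h k t \<partial>lborel)"
    by (rule prod_lborel_nn[OF hm])
  also have "\<dots> = (\<integral>\<^sup>+ t. ennreal (nd (a i) t) * h i t \<partial>lborel)"
    by (rule prod_one[where F="\<lambda>k. \<integral>\<^sup>+ t. ennreal (nd (a k) t) * h k t \<partial>lborel"]) (use i in \<open>auto simp: h_def nd_nn_1\<close>)
  finally show ?thesis by (simp add: h_def)
qed

lemma nd_mgf_c:
  assumes "C \<ge> 0"
  shows "(\<integral>\<^sup>+ t. ennreal (nd a t) * ennreal (C * exp (l * (t - a))) \<partial>lborel) = ennreal (C * exp (l^2/2))"
proof -
  have "(\<integral>\<^sup>+ t. ennreal (nd a t) * ennreal (C * exp (l * (t - a))) \<partial>lborel)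
      = (\<integral>\<^sup>+ t. ennreal C * (ennreal (nd a t) * ennreal (exp (l * (t - a)))) \<partial>lborel)"
    using assms by (intro nn_integral_cong) (simp add: ennreal_mult mult.left_commute)
  also have "\<dots> = ennreal C * ennreal (exp (l^2/2))"
    by (subst nn_integral_cmult) (auto simp: nd_mgf)
  finally show ?thesis using assms by (simp add: ennreal_mult)
qed

lemma nd_mgf_abs_c:
  assumes "C \<ge> 0" "l \<ge> 0"
  shows "(\<integral>\<^sup>+ t. ennreal (nd a t) * ennreal (C * exp (l * \<bar>t - a\<bar>)) \<partial>lborel) \<le> ennreal (C * (2 * exp (l^2/2)))"
proof -
  have "(\<integral>\<^sup>+ t. ennreal (nd a t) * ennreal (C * exp (l * \<bar>t - a\<bar>)) \<partial>lborel)
      = (\<integral>\<^sup>+ t. ennreal C * (ennreal (nd a t) * ennreal (exp (l * \<bar>t - a\<bar>))) \<partial>lborel)"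
    using assms by (intro nn_integral_cong) (simp add: ennreal_mult mult.left_commute)
  also have "\<dots> = ennreal C * (\<integral>\<^sup>+ t. ennreal (nd a t) * ennreal (exp (l * \<bar>t - a\<bar>)) \<partial>lborel)"
    by (subst nn_integral_cmult) auto
  also have "\<dots> \<le> ennreal C * ennreal (2 * exp (l^2/2))"
    by (intro mult_left_mono nd_mgf_abs assms) simp
  finally show ?thesis using assms by (simp add: ennreal_mult)
qed

lemma ennreal_mult_le:
  assumes "a \<le> ennreal A" "b \<le> ennreal B" "A \<ge> 0" "B \<ge> 0"
  shows "a * b \<le> ennreal (A * B)"
proof -
  have "a * b \<le> ennreal A * ennreal B" by (intro mult_mono assms) auto
  then show ?thesis using assms by (simp add: ennreal_mult)
qed

lemma sq_exp_bound: "(2 * u + 8)^2 \<le> 64 * exp (2 * u)" if "u \<ge> 0" for u :: real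
proof -
  have "2 * u + 8 \<le> 8 * (1 + u)" using that by simp
  also have "1 + u \<le> exp u" by (rule exp_ge_add_one_self)
  finally have "2 * u + 8 \<le> 8 * exp u" by simp
  moreover have "0 \<le> 2 * u + 8" using that by simp
  ultimately have sq: "(2 * u + 8)^2 \<le> (8 * exp u)^2" by (rule power_mono)
  have e2: "exp (2 * u) = (exp u)^2" using exp_of_nat_mult[of 2 u] by simp
  have "(8 * exp u)^2 = 64 * exp (2 * u)" unfolding e2 by (simp add: power_mult_distrib)
  then show ?thesis using sq by simp
qed

lemma ar1: "64 * a * (2 * b) = 128 * (a * (b::real))" by simp
lemma ar2: "(64 * a * (2 * b)) * (1 * (2 * c)) = 256 * (a * b * (c::real))" by simp

context design begin

lemma r_ge: "r \<ge> 4" using s16 by (simp add: r_def)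

definition K :: real where "K = 256 * exp (-(r^2)/2 + 2*r + 2)"

lemma pi_risk:
  assumes p: "p permutes {..<n}" and i: "i < n"
  shows "(\<integral>\<^sup>+ x. (\<Prod>k<n. ennreal (nd (tsd (p k)) (x k))) * ennreal ((tsd (p i) - Gx i x)^2) \<partial>PiM {..<n} (\<lambda>_. lborel))
    \<le> ennreal ((if p i < 2*m then 64 * exp (-16) else 0) + real n * K)"
proof -
  define jj where "jj = inv p (tau (p i))"
  define \<sigma> :: real where "\<sigma> = (if even (p i) then 1 else -1)"
  define Wf where "Wf x = (if p i < 2*m then 64 * exp (4 * \<sigma> * (x jj - tsd (p jj)) - 4 * \<sigma> * (x i - tsd (p i)) - 32) else 0)" for x :: "nat \<Rightarrow> real"
  define Ef where "Ef l x = 64 * exp (2 * \<bar>x i - tsd (p i)\<bar>) * exp (r * \<bar>x l - tsd (p l)\<bar> - r^2)" for l and x :: "nat \<Rightarrow> real"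
  have Wf0: "Wf x \<ge> 0" for x by (simp add: Wf_def)
  have Ef0: "Ef l x \<ge> 0" for l x by (simp add: Ef_def)
  have pin: "p i < n" using p i by (metis lessThan_iff permutes_in_image)
  have pjj: "p jj = tau (p i)" unfolding jj_def by (rule permutes_inverses(1)[OF p])
  have jjn: "jj < n"
    using permutes_in_image[OF permutes_inv[OF p], of "tau (p i)"] tau_lt[OF pin] by (simp add: jj_def)
  have sq1: "\<sigma>^2 = 1" by (simp add: \<sigma>_def)
  have pw: "(tsd (p i) - Gx i x)^2 \<le> Wf x + (\<Sum>l<n. Ef l x)" for x
  proof (cases "\<forall>l<n. \<bar>x l - tsd (p l)\<bar> < r")
    case True
    note P2 = pointwise2[OF p i True]
    have "(tsd (p i) - Gx i x)^2 \<le> Wf x"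
    proof (cases "p i < 2 * m")
      case True': True
      show ?thesis
      proof (cases "even (p i)")
        case True'': True
        show ?thesis
        proof (cases "x jj - tsd (p jj) - (x i - tsd (p i)) \<ge> 8")
          case True3: True
          then have "0 \<le> 4 * \<sigma> * (x jj - tsd (p jj)) - 4 * \<sigma> * (x i - tsd (p i)) - 32"
            using True'' by (simp add: \<sigma>_def)
          then have "1 \<le> exp (4 * \<sigma> * (x jj - tsd (p jj)) - 4 * \<sigma> * (x i - tsd (p i)) - 32)" by simp
          then have e64: "64 \<le> Wf x" using True' by (simp add: Wf_def)
          have "(tsd (p i) - Gx i x)^2 \<le> 64" using P2 True' True'' True3 by (simp add: jj_def)
          then show ?thesis using e64 by linarith
        next
          case False3: False
          then show ?thesis using P2 True' True'' by (simp add: Wf_def jj_def)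
        qed
      next
        case False'': False
        show ?thesis
        proof (cases "(x i - tsd (p i)) - (x jj - tsd (p jj)) \<ge> 8")
          case True3: True
          then have "0 \<le> 4 * \<sigma> * (x jj - tsd (p jj)) - 4 * \<sigma> * (x i - tsd (p i)) - 32"
            using False'' by (simp add: \<sigma>_def)
          then have "1 \<le> exp (4 * \<sigma> * (x jj - tsd (p jj)) - 4 * \<sigma> * (x i - tsd (p i)) - 32)" by simp
          then have e64: "64 \<le> Wf x" using True' by (simp add: Wf_def)
          have "(tsd (p i) - Gx i x)^2 \<le> 64" using P2 True' False'' True3 by (simp add: jj_def)
          then show ?thesis using e64 by linarith
        next
          case False3: False
          then show ?thesis using P2 True' False'' by (simp add: Wf_def jj_def)
        qed
      qed
    next
      case False
      then show ?thesis using P2 by (simp add: Wf_def)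
    qed
    moreover have "0 \<le> (\<Sum>l<n. Ef l x)" by (intro sum_nonneg Ef0)
    ultimately show ?thesis by linarith
  next
    case False
    then obtain l where l: "l < n" "\<bar>x l - tsd (p l)\<bar> \<ge> r" by auto
    have "(tsd (p i) - Gx i x)^2 \<le> (2 * \<bar>x i - tsd (p i)\<bar> + 8)^2"
      using pointwise1[OF p i, of x] by (intro sq_le_abs) simp
    also have "\<dots> \<le> 64 * exp (2 * \<bar>x i - tsd (p i)\<bar>)" by (rule sq_exp_bound) simp
    also have "\<dots> \<le> Ef l x"
    proof -
      have "r * r \<le> r * \<bar>x l - tsd (p l)\<bar>" using l(2) r_ge by (intro mult_left_mono) auto
      then have "1 \<le> exp (r * \<bar>x l - tsd (p l)\<bar> - r^2)" by (simp add: power2_eq_square)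
      then show ?thesis unfolding Ef_def by (simp add: mult_left_le)
    qed
    also have "\<dots> \<le> (\<Sum>l<n. Ef l x)" using l(1) by (intro member_le_sum Ef0) auto
    also have "\<dots> \<le> Wf x + (\<Sum>l<n. Ef l x)" using Wf0 by simp
    finally show ?thesis .
  qed
  let ?P = "PiM {..<n} (\<lambda>_. lborel::real measure)"
  let ?D = "\<lambda>x. (\<Prod>k<n. ennreal (nd (tsd (p k)) (x k)))"
  have Dm[measurable]: "?D \<in> borel_measurable ?P" by measurable
  have im[measurable]: "(\<lambda>x. x i) \<in> borel_measurable ?P" using measurable_component_singleton[of i "{..<n}" "\<lambda>_. lborel::real measure"] i by simp
  have jjm[measurable]: "(\<lambda>x. x jj) \<in> borel_measurable ?P" using measurable_component_singleton[of jj "{..<n}" "\<lambda>_. lborel::real measure"] jjn by simp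
  have lm[measurable]: "l < n \<Longrightarrow> (\<lambda>x. x l) \<in> borel_measurable ?P" for l using measurable_component_singleton[of l "{..<n}" "\<lambda>_. lborel::real measure"] by simp
  have Wfm[measurable]: "(\<lambda>x. ennreal (Wf x)) \<in> borel_measurable ?P" unfolding Wf_def by measurable
  have Efm[measurable]: "l < n \<Longrightarrow> (\<lambda>x. ennreal (Ef l x)) \<in> borel_measurable ?P" for l unfolding Ef_def by measurable
  have "(\<integral>\<^sup>+ x. ?D x * ennreal ((tsd (p i) - Gx i x)^2) \<partial>?P)
      \<le> (\<integral>\<^sup>+ x. ?D x * ennreal (Wf x) + (\<Sum>l<n. ?D x * ennreal (Ef l x)) \<partial>?P)"
  proof (intro nn_integral_mono)
    fix x
    have "ennreal ((tsd (p i) - Gx i x)^2) \<le> ennreal (Wf x + (\<Sum>l<n. Ef l x))"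
      using pw[of x] by (rule ennreal_leI)
    also have "\<dots> = ennreal (Wf x) + (\<Sum>l<n. ennreal (Ef l x))"
      using Wf0 Ef0 by (simp add: ennreal_plus sum_nonneg sum_ennreal)
    finally show "?D x * ennreal ((tsd (p i) - Gx i x)^2) \<le> ?D x * ennreal (Wf x) + (\<Sum>l<n. ?D x * ennreal (Ef l x))"
      by (simp add: mult_left_mono distrib_left[symmetric] sum_distrib_left[symmetric])
  qed
  also have "\<dots> = (\<integral>\<^sup>+ x. ?D x * ennreal (Wf x) \<partial>?P) + (\<Sum>l<n. \<integral>\<^sup>+ x. ?D x * ennreal (Ef l x) \<partial>?P)"
  proof -
    have sm: "(\<lambda>x. \<Sum>l<n. ?D x * ennreal (Ef l x)) \<in> borel_measurable ?P"
      by (rule borel_measurable_sum) simp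
    have "(\<integral>\<^sup>+ x. (\<Sum>l<n. ?D x * ennreal (Ef l x)) \<partial>?P) = (\<Sum>l<n. \<integral>\<^sup>+ x. ?D x * ennreal (Ef l x) \<partial>?P)"
      by (rule nn_integral_sum) simp
    then show ?thesis using sm by (subst nn_integral_add) auto
  qed
  also have "\<dots> \<le> ennreal (if p i < 2*m then 64 * exp (-16) else 0) + (\<Sum>l<n. ennreal K)"
  proof (intro add_mono sum_mono)
    show "(\<integral>\<^sup>+ x. ?D x * ennreal (Wf x) \<partial>?P) \<le> ennreal (if p i < 2*m then 64 * exp (-16) else 0)"
    proof (cases "p i < 2 * m")
      case False
      then show ?thesis by (simp add: Wf_def)
    next
      case True
      have jji: "i \<noteq> jj" using pjj tau_neq[OF True] by auto
      have "(\<integral>\<^sup>+ x. ?D x * ennreal (Wf x) \<partial>?P)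
          = (\<integral>\<^sup>+ x. ?D x * (ennreal (64 * exp (-32) * exp ((-4 * \<sigma>) * (x i - tsd (p i)))) * ennreal (1 * exp ((4 * \<sigma>) * (x jj - tsd (p jj))))) \<partial>?P)"
      proof (intro nn_integral_cong)
        fix x
        have "Wf x = (64 * exp (-32) * exp ((-4 * \<sigma>) * (x i - tsd (p i)))) * (1 * exp ((4 * \<sigma>) * (x jj - tsd (p jj))))"
        proof -
          have "exp (4 * \<sigma> * (x jj - tsd (p jj)) - 4 * \<sigma> * (x i - tsd (p i)) - 32) = exp (-32) * exp ((-4 * \<sigma>) * (x i - tsd (p i))) * exp ((4 * \<sigma>) * (x jj - tsd (p jj)))"
            unfolding exp_add[symmetric] by (rule arg_cong[where f=exp]) (simp add: algebra_simps)
          then show ?thesis using True by (simp add: Wf_def)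
        qed
        then show "?D x * ennreal (Wf x) = ?D x * (ennreal (64 * exp (-32) * exp ((-4 * \<sigma>) * (x i - tsd (p i)))) * ennreal (1 * exp ((4 * \<sigma>) * (x jj - tsd (p jj)))))"
          by (simp add: ennreal_mult)
      qed
      also have "\<dots> = (\<integral>\<^sup>+ t. ennreal (nd (tsd (p i)) t) * ennreal (64 * exp (-32) * exp ((-4 * \<sigma>) * (t - tsd (p i)))) \<partial>lborel)
          * (\<integral>\<^sup>+ t. ennreal (nd (tsd (p jj)) t) * ennreal (1 * exp ((4 * \<sigma>) * (t - tsd (p jj)))) \<partial>lborel)"
        by (rule pair_int[OF i jjn jji]) measurable
      also have "\<dots> = ennreal (64 * exp (-32) * exp ((-4 * \<sigma>)^2/2)) * ennreal (1 * exp ((4 * \<sigma>)^2/2))"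
      proof -
        have I1: "(\<integral>\<^sup>+ t. ennreal (nd (tsd (p i)) t) * ennreal (64 * exp (-32) * exp ((-4 * \<sigma>) * (t - tsd (p i)))) \<partial>lborel) = ennreal (64 * exp (-32) * exp ((-4 * \<sigma>)^2/2))"
          by (rule nd_mgf_c) simp
        have I2: "(\<integral>\<^sup>+ t. ennreal (nd (tsd (p jj)) t) * ennreal (1 * exp ((4 * \<sigma>) * (t - tsd (p jj)))) \<partial>lborel) = ennreal (1 * exp ((4 * \<sigma>)^2/2))"
          by (rule nd_mgf_c) simp
        show ?thesis unfolding I1 I2 ..
      qed
      also have "\<dots> = ennreal (64 * exp (-16))"
      proof -
        have "(-4 * \<sigma>)^2/2 = 8" "(4 * \<sigma>)^2/2 = 8" using sq1 by (simp_all add: power_mult_distrib)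
        then have "64 * exp (-32) * exp ((-4 * \<sigma>)^2/2) * (1 * exp ((4 * \<sigma>)^2/2)) = 64 * (exp (-32) * exp 8 * exp 8)"
          by (simp only: mult.assoc mult_1)
        also have "exp (-32) * exp 8 * exp (8::real) = exp (-16)"
          unfolding exp_add[symmetric] by simp
        finally have "64 * exp (-32) * exp ((-4 * \<sigma>)^2/2) * (1 * exp ((4 * \<sigma>)^2/2)) = 64 * exp (-16)" .
        then show ?thesis by (simp add: ennreal_mult[symmetric])
      qed
      finally show ?thesis using True by simp
    qed
  next
    fix l assume l: "l \<in> {..<n}"
    show "(\<integral>\<^sup>+ x. ?D x * ennreal (Ef l x) \<partial>?P) \<le> ennreal K"
    proof (cases "l = i")
      case True
      have "(\<integral>\<^sup>+ x. ?D x * ennreal (Ef l x) \<partial>?P) = (\<integral>\<^sup>+ x. ?D x * ennreal (64 * exp (-(r^2)) * exp ((2 + r) * \<bar>x i - tsd (p i)\<bar>)) \<partial>?P)"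
      proof (intro nn_integral_cong)
        fix x
        have "exp (2 * \<bar>x i - tsd (p i)\<bar>) * exp (r * \<bar>x i - tsd (p i)\<bar> - r^2) = exp (-(r^2)) * exp ((2 + r) * \<bar>x i - tsd (p i)\<bar>)"
          unfolding exp_add[symmetric] by (rule arg_cong[where f=exp]) (simp add: algebra_simps)
        then show "?D x * ennreal (Ef l x) = ?D x * ennreal (64 * exp (-(r^2)) * exp ((2 + r) * \<bar>x i - tsd (p i)\<bar>))"
          using True by (simp add: Ef_def mult.assoc)
      qed
      also have "\<dots> = (\<integral>\<^sup>+ t. ennreal (nd (tsd (p i)) t) * ennreal (64 * exp (-(r^2)) * exp ((2 + r) * \<bar>t - tsd (p i)\<bar>)) \<partial>lborel)"
        by (rule single_int[OF i]) measurable
      also have "\<dots> \<le> ennreal (64 * exp (-(r^2)) * (2 * exp ((2 + r)^2/2)))"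
        by (rule nd_mgf_abs_c) (use r_ge in auto)
      also have "\<dots> \<le> ennreal K"
      proof (rule ennreal_leI)
        have e: "exp (-(r^2)) * exp ((2 + r)^2/2) = exp (-(r^2)/2 + 2*r + 2)"
          unfolding exp_add[symmetric] by (rule arg_cong[where f=exp]) (simp add: power2_eq_square algebra_simps)
        have "64 * exp (-(r^2)) * (2 * exp ((2 + r)^2/2)) = 128 * (exp (-(r^2)) * exp ((2 + r)^2/2))"
          by (rule ar1)
        also have "\<dots> = 128 * exp (-(r^2)/2 + 2*r + 2)" by (simp only: e)
        also have "\<dots> \<le> K" unfolding K_def by simp
        finally show "64 * exp (-(r^2)) * (2 * exp ((2 + r)^2/2)) \<le> K" .
      qed
      finally show ?thesis .
    next
      case False
      have ln: "l < n" using l by simp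
      have "(\<integral>\<^sup>+ x. ?D x * ennreal (Ef l x) \<partial>?P) = (\<integral>\<^sup>+ x. ?D x * (ennreal (64 * exp (-(r^2)) * exp (2 * \<bar>x i - tsd (p i)\<bar>)) * ennreal (1 * exp (r * \<bar>x l - tsd (p l)\<bar>))) \<partial>?P)"
      proof (intro nn_integral_cong)
        fix x
        have "exp (r * \<bar>x l - tsd (p l)\<bar> - r^2) = exp (-(r^2)) * exp (r * \<bar>x l - tsd (p l)\<bar>)"
          unfolding exp_add[symmetric] by (rule arg_cong[where f=exp]) (simp add: algebra_simps)
        then have "Ef l x = (64 * exp (-(r^2)) * exp (2 * \<bar>x i - tsd (p i)\<bar>)) * (1 * exp (r * \<bar>x l - tsd (p l)\<bar>))"
          by (simp add: Ef_def)
        then show "?D x * ennreal (Ef l x) = ?D x * (ennreal (64 * exp (-(r^2)) * exp (2 * \<bar>x i - tsd (p i)\<bar>)) * ennreal (1 * exp (r * \<bar>x l - tsd (p l)\<bar>)))"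
          by (simp add: ennreal_mult)
      qed
      also have "\<dots> = (\<integral>\<^sup>+ t. ennreal (nd (tsd (p i)) t) * ennreal (64 * exp (-(r^2)) * exp (2 * \<bar>t - tsd (p i)\<bar>)) \<partial>lborel)
          * (\<integral>\<^sup>+ t. ennreal (nd (tsd (p l)) t) * ennreal (1 * exp (r * \<bar>t - tsd (p l)\<bar>)) \<partial>lborel)"
        by (rule pair_int[OF i ln]) (use False in auto)
      also have "\<dots> \<le> ennreal ((64 * exp (-(r^2)) * (2 * exp (2^2/2))) * (1 * (2 * exp (r^2/2))))"
        by (intro ennreal_mult_le nd_mgf_abs_c) (use r_ge in auto)
      also have "\<dots> \<le> ennreal K"
      proof (rule ennreal_leI)
        have e: "exp (-(r^2)) * exp (2^2/2) * exp (r^2/2) = exp (-(r^2)/2 + 2)"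
          unfolding exp_add[symmetric] by (rule arg_cong[where f=exp]) (simp add: power2_eq_square algebra_simps)
        have "(64 * exp (-(r^2)) * (2 * exp (2^2/2))) * (1 * (2 * exp (r^2/2))) = 256 * (exp (-(r^2)) * exp (2^2/2) * exp (r^2/2))"
          by (rule ar2)
        also have "\<dots> = 256 * exp (-(r^2)/2 + 2)" by (simp only: e)
        also have "\<dots> \<le> 256 * exp (-(r^2)/2 + 2*r + 2)" using r_ge by simp
        finally show "(64 * exp (-(r^2)) * (2 * exp (2^2/2))) * (1 * (2 * exp (r^2/2))) \<le> K"
          unfolding K_def .
      qed
      finally show ?thesis .
    qed
  qed
  also have "\<dots> = ennreal ((if p i < 2*m then 64 * exp (-16) else 0) + real n * K)"
    by (simp add: ennreal_plus[symmetric] K_def ennreal_of_nat_eq_real_of_nat ennreal_mult[symmetric] del: ennreal_plus)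
  finally show ?thesis .
qed

end

lemma nd_lb:
  assumes "\<bar>t - a\<bar> \<le> 9/2"
  shows "nd a t \<ge> nd 0 (9/2)"
proof -
  have "(t - a)^2 \<le> (9/2)^2" using assms by (metis abs_ge_zero order_trans power2_abs power_mono)
  then have "exp (- ((9 / 2)\<^sup>2 / 2)) \<le> exp (- ((t - a)\<^sup>2 / 2))" by simp
  then have "exp (- ((9 / 2)\<^sup>2 / 2)) / sqrt (2 * pi) \<le> exp (- ((t - a)\<^sup>2 / 2)) / sqrt (2 * pi)"
    by (rule divide_right_mono) simp
  then show ?thesis unfolding normal_density_def by simp
qed

lemma two_sq: "(u - y)^2 + (v - y)^2 \<ge> (u - v)^2 / (2::real)"
proof -
  have "2 * ((u - y)^2 + (v - y)^2) - (u - v)^2 = (u + v - 2 * y)^2" by (simp add: power2_eq_square algebra_simps)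
  moreover have "(u + v - 2 * y)^2 \<ge> 0" by simp
  moreover have "\<And>A B C::real. 2 * B - A = C \<Longrightarrow> 0 \<le> C \<Longrightarrow> A / 2 \<le> B" by linarith
  ultimately show ?thesis by blast
qed

context design begin

abbreviation phi45 :: real where "phi45 \<equiv> nd 0 (9/2)"

definition Hf :: "(real \<Rightarrow> real) \<Rightarrow> nat \<Rightarrow> ennreal" where
  "Hf f a = (\<integral>\<^sup>+ t. ennreal (nd (tsd a) t) * ennreal ((tsd a - f t)^2) \<partial>lborel)"

lemma pair_lb:
  assumes f[measurable]: "f \<in> borel_measurable borel" and a: "a < 2 * m"
  shows "Hf f a + Hf f (tau a) \<ge> ennreal (16 * phi45)"
proof -
  define c0 where "c0 = c (cl a)"
  have ua: "tsd a = c0 + off a" by (simp add: tsd_def c0_def)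
  have va: "tsd (tau a) = c0 - off a" using off_tau[OF a] cl_tau by (simp add: tsd_def c0_def)
  have oa: "off a = 4 \<or> off a = -4" using a by (simp add: off_def)
  have em: "emeasure lborel {c0 - 1/2 .. c0} = ennreal (1/2)" by (subst emeasure_lborel_Icc) auto
  have "ennreal (32 * phi45) * ennreal (1/2) = ennreal (32 * phi45 * (1/2))"
    by (rule ennreal_mult[symmetric]) auto
  then have "ennreal (16 * phi45) = ennreal (32 * phi45) * emeasure lborel {c0 - 1/2 .. c0}"
    unfolding em by simp
  also have "\<dots> = (\<integral>\<^sup>+ t. ennreal (32 * phi45) * indicator {c0 - 1/2 .. c0} t \<partial>lborel)"
    by (simp add: nn_integral_cmult_indicator)
  also have "\<dots> \<le> (\<integral>\<^sup>+ t. ennreal (nd (tsd a) t) * ennreal ((tsd a - f t)^2) + ennreal (nd (tsd (tau a)) t) * ennreal ((tsd (tau a) - f t)^2) \<partial>lborel)"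
  proof (intro nn_integral_mono)
    fix t
    show "ennreal (32 * phi45) * indicator {c0 - 1/2 .. c0} t \<le> ennreal (nd (tsd a) t) * ennreal ((tsd a - f t)^2) + ennreal (nd (tsd (tau a)) t) * ennreal ((tsd (tau a) - f t)^2)"
    proof (cases "t \<in> {c0 - 1/2 .. c0}")
      case False then show ?thesis by simp
    next
      case True
      have d1: "\<bar>t - tsd a\<bar> \<le> 9/2" using True ua oa by auto
      have d2: "\<bar>t - tsd (tau a)\<bar> \<le> 9/2" using True va oa by auto
      have n1: "nd (tsd a) t \<ge> phi45" using d1 by (rule nd_lb)
      have n2: "nd (tsd (tau a)) t \<ge> phi45" using d2 by (rule nd_lb)
      have p0: "phi45 \<ge> 0" by simp
      have s32: "(tsd a - f t)^2 + (tsd (tau a) - f t)^2 \<ge> 32"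
      proof -
        have e64: "(tsd a - tsd (tau a))^2 = 64" using ua va oa by auto
        have "(tsd a - tsd (tau a))^2 / 2 \<le> (tsd a - f t)^2 + (tsd (tau a) - f t)^2" by (rule two_sq)
        then show ?thesis unfolding e64 by simp
      qed
      have "32 * phi45 \<le> phi45 * ((tsd a - f t)^2 + (tsd (tau a) - f t)^2)"
        using mult_left_mono[OF s32 p0] by (simp add: mult.commute)
      also have "\<dots> \<le> nd (tsd a) t * (tsd a - f t)^2 + nd (tsd (tau a)) t * (tsd (tau a) - f t)^2"
        using n1 n2 by (simp add: distrib_left add_mono mult_right_mono)
      finally have "32 * phi45 \<le> nd (tsd a) t * (tsd a - f t)^2 + nd (tsd (tau a)) t * (tsd (tau a) - f t)^2" .
      then have "ennreal (32 * phi45) \<le> ennreal (nd (tsd a) t * (tsd a - f t)^2 + nd (tsd (tau a)) t * (tsd (tau a) - f t)^2)"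
        by (rule ennreal_leI)
      then show ?thesis using True by (simp add: ennreal_plus ennreal_mult normal_density_nonneg)
    qed
  qed
  also have "\<dots> = Hf f a + Hf f (tau a)"
    unfolding Hf_def by (rule nn_integral_add) auto
  finally show ?thesis .
qed

lemma count_pairs:
  assumes p: "p permutes {..<n}"
  shows "(\<Sum>i<n. if p i < 2 * m then B else 0) = real (2 * m) * (B::real)"
proof -
  have "(\<Sum>i<n. if p i < 2 * m then B else 0) = (\<Sum>a\<in>p ` {..<n}. if a < 2 * m then B else 0)"
    by (subst sum.reindex) (auto intro: inj_on_subset[OF permutes_inj[OF p]])
  also have "p ` {..<n} = {..<n}" by (rule permutes_image[OF p])
  also have "(\<Sum>a<n. if a < 2 * m then B else 0) = (\<Sum>a\<in>{a\<in>{..<n}. a < 2 * m}. B)"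
    by (rule sum.inter_filter[symmetric]) simp
  also have "{a\<in>{..<n}. a < 2 * m} = {..<2*m}" using m2n by auto
  finally show ?thesis by simp
qed

lemma sep_total:
  assumes fm: "\<And>i. i < n \<Longrightarrow> f i \<in> borel_measurable borel"
  shows "(\<Sum>i<n. \<Sum>p\<in>perms n. ennreal (1 / fact n) * Hf (f i) (p i)) \<ge> ennreal (16 * phi45 * real m)"
proof -
  define B where "B = 16 * phi45"
  have B0: "B \<ge> 0" by (simp add: B_def)
  define S where "S i = (\<Sum>p\<in>perms n. Hf (f i) (p i))" for i
  have S2: "S i + S i \<ge> ennreal (\<Sum>p\<in>perms n. if p i < 2 * m then B else 0)" if i: "i < n" for i
  proof -
    have "S i = (\<Sum>p\<in>perms n. Hf (f i) (tau (p i)))"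
      unfolding S_def
      by (rule sum.reindex_bij_witness[where i="\<lambda>p. tau \<circ> p" and j="\<lambda>p. tau \<circ> p"])
         (auto simp: tau_tau perms_def intro: permutes_compose[OF _ tau_permutes])
    then have "S i + S i = (\<Sum>p\<in>perms n. Hf (f i) (p i) + Hf (f i) (tau (p i)))"
      by (simp add: S_def sum.distrib)
    also have "\<dots> \<ge> (\<Sum>p\<in>perms n. ennreal (if p i < 2 * m then B else 0))"
    proof (intro sum_mono)
      fix p assume "p \<in> perms n"
      show "ennreal (if p i < 2 * m then B else 0) \<le> Hf (f i) (p i) + Hf (f i) (tau (p i))"
        using pair_lb[OF fm[OF i], of "p i"] by (auto simp: B_def)
    qed
    finally show ?thesis using B0 by (simp add: sum_ennreal)
  qed
  have "(\<Sum>i<n. S i + S i) \<ge> (\<Sum>i<n. ennreal (\<Sum>p\<in>perms n. if p i < 2 * m then B else 0))"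
    by (intro sum_mono S2) simp
  also have "(\<Sum>i<n. ennreal (\<Sum>p\<in>perms n. if p i < 2 * m then B else 0)) = ennreal (\<Sum>i<n. \<Sum>p\<in>perms n. if p i < 2 * m then B else 0)"
    using B0 by (subst sum_ennreal) (auto intro!: sum_nonneg)
  also have "(\<Sum>i<n. \<Sum>p\<in>perms n. if p i < 2 * m then B else 0) = (\<Sum>p\<in>perms n. \<Sum>i<n. if p i < 2 * m then B else 0)"
    by (rule sum.swap)
  also have "\<dots> = (\<Sum>p\<in>perms n. real (2 * m) * B)"
    by (intro sum.cong refl count_pairs) (simp add: perms_def)
  also have "\<dots> = fact n * (2 * real m * B)" by (simp add: card_perms)
  finally have T2: "ennreal (fact n * (2 * real m * B)) \<le> (\<Sum>i<n. S i) + (\<Sum>i<n. S i)"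
    by (simp add: sum.distrib)
  have "ennreal (fact n * (real m * B)) \<le> (\<Sum>i<n. S i)"
  proof (cases "(\<Sum>i<n. S i)" rule: ennreal_cases)
    case (real t)
    then have "fact n * (2 * real m * B) \<le> t + t"
      using T2 by (simp add: ennreal_plus[symmetric] del: ennreal_plus)
    then have "fact n * (real m * B) \<le> t" by (simp add: algebra_simps)
    then show ?thesis using real by simp
  next
    case top
    then show ?thesis by (metis top_greatest)
  qed
  then have "ennreal (1 / fact n) * ennreal (fact n * (real m * B)) \<le> ennreal (1 / fact n) * (\<Sum>i<n. S i)"
    by (rule mult_left_mono) simp
  moreover have "ennreal (1 / fact n) * ennreal (fact n * (real m * B)) = ennreal (real m * B)"
    using B0 by (simp add: ennreal_mult[symmetric])
  moreover have "ennreal (1 / fact n) * (\<Sum>i<n. S i) = (\<Sum>i<n. \<Sum>p\<in>perms n. ennreal (1 / fact n) * Hf (f i) (p i))"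
    by (simp add: S_def sum_distrib_left)
  ultimately show ?thesis by (simp add: B_def mult.commute)
qed

end

lemma D_meas[measurable]: "(\<lambda>x. \<Prod>k<(n::nat). ennreal (nd (a k) (x k))) \<in> borel_measurable (PiM {..<n} (\<lambda>_. lborel::real measure))"
proof (rule borel_measurable_prod_ennreal)
  fix k assume k: "k \<in> {..<n}"
  have [measurable]: "(\<lambda>x. x k) \<in> borel_measurable (PiM {..<n} (\<lambda>_. lborel::real measure))"
    using measurable_component_singleton[of k "{..<n}" "\<lambda>_. lborel::real measure"] k by simp
  show "(\<lambda>x. ennreal (nd (a k) (x k))) \<in> borel_measurable (PiM {..<n} (\<lambda>_. lborel::real measure))"
    by measurable
qed

lemma cond_bound:
  assumes sf: "sigma_finite_subalgebra M F" and ps: "prob_space M"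
    and f[measurable]: "f \<in> borel_measurable M" and fb: "\<And>x. x \<in> space M \<Longrightarrow> \<bar>f x\<bar> \<le> B"
  shows "AE x in M. \<bar>real_cond_exp M F f x\<bar> \<le> B"
proof -
  interpret sigma_finite_subalgebra M F by (rule sf)
  interpret prob_space M by (rule ps)
  have fi: "integrable M f"
    by (rule integrable_const_bound[where B=B]) (auto simp: fb)
  have Yb1: "AE x in M. real_cond_exp M F f x \<le> B"
    by (rule real_cond_exp_le_c[OF fi]) (auto intro!: AE_I2 dest: fb)
  have Yb2: "AE x in M. real_cond_exp M F f x \<ge> -B"
    by (rule real_cond_exp_ge_c[OF fi]) (auto intro!: AE_I2 dest: fb)
  show ?thesis using Yb1 Yb2 by auto
qed

context design begin

lemma Gx_meas:
  assumes i: "i < n"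
  shows "Gx i \<in> borel_measurable (PiM {..<n} (\<lambda>_. borel::real measure))"
proof -
  let ?P = "PiM {..<n} (\<lambda>_. borel::real measure)"
  have comp[measurable]: "j < n \<Longrightarrow> (\<lambda>x. x j) \<in> borel_measurable ?P" for j
    using measurable_component_singleton[of j "{..<n}" "\<lambda>_. borel::real measure"] by simp
  have ci[measurable]: "(\<lambda>x. x i) \<in> borel_measurable ?P" using comp i by simp
  have sm: "(\<lambda>x. \<Sum>j\<in>{..<n} - {i}. if win k (x j) then x i - x j else 0) \<in> borel_measurable ?P" for k
    by (rule borel_measurable_sum) (unfold win_def, measurable)
  have vm: "(\<lambda>x. val i k x) \<in> borel_measurable ?P" for k
    unfolding val_def using sm[of k] by measurable
  have "(\<lambda>x. (\<Sum>k\<le>m. if win k (x i) then val i k x else 0)) \<in> borel_measurable ?P"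
    by (rule borel_measurable_sum) (use vm in \<open>unfold win_def, measurable\<close>)
  moreover have "(\<lambda>x. if (\<forall>k\<le>m. \<not> win k (x i)) then clip (x i) else 0) \<in> borel_measurable ?P"
    unfolding win_def clip_def by measurable
  ultimately show ?thesis unfolding Gx_def[abs_def] by measurable
qed

lemma Gx_bound: "\<bar>Gx i x\<bar> \<le> \<mu>"
proof (cases "\<exists>k\<le>m. win k (x i)")
  case True
  then obtain k where k: "k \<le> m" "win k (x i)" by auto
  have "Gx i x = val i k x" by (rule Gx_win[where x=x and i=i, OF k])
  moreover have "\<bar>val i k x - c k\<bar> \<le> 4" by (rule val_bound)
  moreover have "real k * s \<le> real m * s" using k(1) s16 by (intro mult_right_mono) auto
  moreover have "0 \<le> real k * s" using s16 by simp
  ultimately show ?thesis using fit unfolding c_def by (smt (verit))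
next
  case False
  then have "Gx i x = clip (x i)" by (intro Gx_nowin) auto
  then show ?thesis using mu_ge by (auto simp: clip_def)
qed

lemma theta_bd: "i < n \<Longrightarrow> \<omega> \<in> space (perm_gauss_model n tsd) \<Longrightarrow> \<bar>theta_rv tsd i \<omega>\<bar> \<le> \<mu>"
  by (rule theta_bound) (use tsd_range in auto)

lemma sep_term:
  assumes i: "i < n"
  shows "ennreal (\<integral>\<omega>. (theta_rv tsd i \<omega> - theta_S n tsd i \<omega>)^2 \<partial>perm_gauss_model n tsd)
    = (\<Sum>p\<in>perms n. ennreal (1 / fact n) * Hf (\<lambda>t. theta_S n tsd i (emb n i t)) (p i))"
proof -
  let ?M = "perm_gauss_model n tsd"
  let ?S = "theta_S n tsd i"
  define fS where "fS t = ?S (emb n i t)" for t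
  interpret ps: prob_space ?M by (rule prob_space_model)
  have Sg: "?S \<in> borel_measurable (sigma_Xi n tsd i)" unfolding theta_S_def by simp
  note R = Xi_represent[OF Sg i]
  have fSm[measurable]: "fS \<in> borel_measurable borel" using R(1) unfolding fS_def[abs_def] .
  have Sm[measurable]: "?S \<in> borel_measurable ?M" unfolding theta_S_def by simp
  have ci[measurable]: "(\<lambda>x. x i) \<in> borel_measurable (PiM {..<n} (\<lambda>_. lborel::real measure))"
    using measurable_component_singleton[of i "{..<n}" "\<lambda>_. lborel::real measure"] i by simp
  have Sb: "AE \<omega> in ?M. \<bar>?S \<omega>\<bar> \<le> \<mu>"
    unfolding theta_S_def by (rule cond_bound[OF sfs_Xi[OF i] prob_space_model theta_meas]) (rule theta_bd[OF i])
  have tb: "AE \<omega> in ?M. \<bar>theta_rv tsd i \<omega>\<bar> \<le> \<mu>" by (rule AE_I2) (rule theta_bd[OF i])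
  have int: "integrable ?M (\<lambda>\<omega>. (theta_rv tsd i \<omega> - ?S \<omega>)^2)"
    apply (rule ps.integrable_const_bound[where B="(\<mu> + \<mu>)^2"])
    using tb Sb apply eventually_elim
     apply (rule sq_diff_bound) apply auto
    done
  have "ennreal (\<integral>\<omega>. (theta_rv tsd i \<omega> - ?S \<omega>)^2 \<partial>?M) = (\<integral>\<^sup>+ \<omega>. ennreal ((theta_rv tsd i \<omega> - ?S \<omega>)^2) \<partial>?M)"
    using int by (subst nn_integral_eq_integral) auto
  also have "\<dots> = (\<integral>\<^sup>+ \<omega>. ennreal ((tsd (fst \<omega> i) - fS (snd \<omega> i))^2) \<partial>?M)"
    by (intro nn_integral_cong) (simp add: theta_rv_def fS_def R(2)[symmetric])
  also have "\<dots> = (\<Sum>p\<in>perms n. \<integral>\<^sup>+ x. ennreal (1 / fact n) * ((\<Prod>k<n. ennreal (nd (tsd (p k)) (x k))) * ennreal ((tsd (p i) - fS (x i))^2)) \<partial>PiM {..<n} (\<lambda>_. lborel))"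
  proof (subst model_nn_integral)
    show "(\<lambda>\<omega>. ennreal ((tsd (fst \<omega> i) - fS (snd \<omega> i))^2)) \<in> borel_measurable (count_space (perms n) \<Otimes>\<^sub>M PiM {..<n} (\<lambda>_. lborel::real measure))"
    proof (rule measurable_pair_measure_countable1)
      show "countable (perms n)" by (simp add: countable_finite finite_perms)
      fix p
      have [measurable]: "(\<lambda>x. x i) \<in> borel_measurable (PiM {..<n} (\<lambda>_. lborel::real measure))"
        using measurable_component_singleton[of i "{..<n}" "\<lambda>_. lborel::real measure"] i by simp
      show "(\<lambda>x. ennreal ((tsd (fst (p, x) i) - fS (snd (p, x) i))^2)) \<in> borel_measurable (PiM {..<n} (\<lambda>_. lborel::real measure))"
        by simp
    qed
  qed simp
  also have "\<dots> = (\<Sum>p\<in>perms n. ennreal (1 / fact n) * Hf fS (p i))"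
  proof (intro sum.cong refl)
    fix p
    note D = D_meas[where n=n and a="\<lambda>k. tsd (p k)"]
    have U[measurable]: "(\<lambda>x. ennreal ((tsd (p i) - fS (x i))^2)) \<in> borel_measurable (PiM {..<n} (\<lambda>_. lborel::real measure))"
      by measurable
    have "(\<integral>\<^sup>+ x. ennreal (1 / fact n) * ((\<Prod>k<n. ennreal (nd (tsd (p k)) (x k))) * ennreal ((tsd (p i) - fS (x i))^2)) \<partial>PiM {..<n} (\<lambda>_. lborel))
      = ennreal (1 / fact n) * (\<integral>\<^sup>+ x. (\<Prod>k<n. ennreal (nd (tsd (p k)) (x k))) * ennreal ((tsd (p i) - fS (x i))^2) \<partial>PiM {..<n} (\<lambda>_. lborel))"
      by (rule nn_integral_cmult) measurable
    also have "(\<integral>\<^sup>+ x. (\<Prod>k<n. ennreal (nd (tsd (p k)) (x k))) * ennreal ((tsd (p i) - fS (x i))^2) \<partial>PiM {..<n} (\<lambda>_. lborel))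
      = Hf fS (p i)"
      unfolding Hf_def by (rule single_int[OF i, where a="\<lambda>k. tsd (p k)" and u="\<lambda>t. ennreal ((tsd (p i) - fS t)^2)", simplified]) measurable
    finally show "(\<integral>\<^sup>+ x. ennreal (1 / fact n) * ((\<Prod>k<n. ennreal (nd (tsd (p k)) (x k))) * ennreal ((tsd (p i) - fS (x i))^2)) \<partial>PiM {..<n} (\<lambda>_. lborel))
      = ennreal (1 / fact n) * Hf fS (p i)" .
  qed
  finally show ?thesis unfolding fS_def[abs_def] .
qed

lemma Gx_meas_lborel:
  assumes i: "i < n"
  shows "Gx i \<in> borel_measurable (PiM {..<n} (\<lambda>_. lborel::real measure))"
proof -
  have "sets (PiM {..<n} (\<lambda>_. lborel::real measure)) = sets (PiM {..<n} (\<lambda>_. borel::real measure))"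
    by (rule sets_PiM_cong) auto
  then show ?thesis using Gx_meas[OF i] measurable_cong_sets[OF _ refl] by blast
qed

lemma GM_meas:
  assumes i: "i < n"
  shows "(\<lambda>\<omega>. Gx i (snd \<omega>)) \<in> borel_measurable (perm_gauss_model n tsd)"
    and "(\<lambda>\<omega>. Gx i (snd \<omega>)) \<in> borel_measurable (sigma_X n tsd)"
proof -
  show "(\<lambda>\<omega>. Gx i (snd \<omega>)) \<in> borel_measurable (perm_gauss_model n tsd)"
    using measurable_compose[OF snd_meas Gx_meas[OF i]] by (simp add: comp_def)
  have sX: "snd \<in> sigma_X n tsd \<rightarrow>\<^sub>M PiM {..<n} (\<lambda>_. borel::real measure)"
    unfolding sigma_X_def
    by (rule measurable_vimage_algebra1) (use measurable_space[OF snd_meas] in blast)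
  show "(\<lambda>\<omega>. Gx i (snd \<omega>)) \<in> borel_measurable (sigma_X n tsd)"
    using measurable_compose[OF sX Gx_meas[OF i]] by (simp add: comp_def)
qed

lemma pi_term:
  assumes i: "i < n"
  shows "ennreal (\<integral>\<omega>. (theta_rv tsd i \<omega> - Gx i (snd \<omega>))^2 \<partial>perm_gauss_model n tsd)
    \<le> ennreal ((1 / fact n) * (\<Sum>p\<in>perms n. (if p i < 2*m then 64 * exp (-16) else 0) + real n * K))"
proof -
  let ?M = "perm_gauss_model n tsd"
  interpret ps: prob_space ?M by (rule prob_space_model)
  have Gm[measurable]: "(\<lambda>\<omega>. Gx i (snd \<omega>)) \<in> borel_measurable ?M" by (rule GM_meas(1)[OF i])
  have Gl[measurable]: "Gx i \<in> borel_measurable (PiM {..<n} (\<lambda>_. lborel::real measure))" by (rule Gx_meas_lborel[OF i])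
  have int: "integrable ?M (\<lambda>\<omega>. (theta_rv tsd i \<omega> - Gx i (snd \<omega>))^2)"
    apply (rule ps.integrable_const_bound[where B="(\<mu> + \<mu>)^2"])
     apply (rule AE_I2) apply (rule sq_diff_bound) apply (rule theta_bd[OF i], assumption) apply (rule Gx_bound)
    apply measurable
    done
  have "ennreal (\<integral>\<omega>. (theta_rv tsd i \<omega> - Gx i (snd \<omega>))^2 \<partial>?M) = (\<integral>\<^sup>+ \<omega>. ennreal ((theta_rv tsd i \<omega> - Gx i (snd \<omega>))^2) \<partial>?M)"
    using int by (subst nn_integral_eq_integral) auto
  also have "\<dots> = (\<integral>\<^sup>+ \<omega>. ennreal ((tsd (fst \<omega> i) - Gx i (snd \<omega>))^2) \<partial>?M)"
    by (simp add: theta_rv_def)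
  also have "\<dots> = (\<Sum>p\<in>perms n. \<integral>\<^sup>+ x. ennreal (1 / fact n) * ((\<Prod>k<n. ennreal (nd (tsd (p k)) (x k))) * ennreal ((tsd (p i) - Gx i x)^2)) \<partial>PiM {..<n} (\<lambda>_. lborel))"
  proof (subst model_nn_integral)
    show "(\<lambda>\<omega>. ennreal ((tsd (fst \<omega> i) - Gx i (snd \<omega>))^2)) \<in> borel_measurable (count_space (perms n) \<Otimes>\<^sub>M PiM {..<n} (\<lambda>_. lborel::real measure))"
    proof (rule measurable_pair_measure_countable1)
      show "countable (perms n)" by (simp add: countable_finite finite_perms)
      fix p
      show "(\<lambda>x. ennreal ((tsd (fst (p, x) i) - Gx i (snd (p, x)))^2)) \<in> borel_measurable (PiM {..<n} (\<lambda>_. lborel::real measure))"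
        by simp
    qed
  qed simp
  also have "\<dots> \<le> (\<Sum>p\<in>perms n. ennreal (1 / fact n) * ennreal ((if p i < 2*m then 64 * exp (-16) else 0) + real n * K))"
  proof (intro sum_mono)
    fix p assume p: "p \<in> perms n"
    note D = D_meas[where n=n and a="\<lambda>k. tsd (p k)"]
    have "(\<integral>\<^sup>+ x. ennreal (1 / fact n) * ((\<Prod>k<n. ennreal (nd (tsd (p k)) (x k))) * ennreal ((tsd (p i) - Gx i x)^2)) \<partial>PiM {..<n} (\<lambda>_. lborel))
      = ennreal (1 / fact n) * (\<integral>\<^sup>+ x. (\<Prod>k<n. ennreal (nd (tsd (p k)) (x k))) * ennreal ((tsd (p i) - Gx i x)^2) \<partial>PiM {..<n} (\<lambda>_. lborel))"
      by (rule nn_integral_cmult) measurable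
    also have "\<dots> \<le> ennreal (1 / fact n) * ennreal ((if p i < 2*m then 64 * exp (-16) else 0) + real n * K)"
      by (intro mult_left_mono pi_risk i) (use p in \<open>auto simp: perms_def\<close>)
    finally show "(\<integral>\<^sup>+ x. ennreal (1 / fact n) * ((\<Prod>k<n. ennreal (nd (tsd (p k)) (x k))) * ennreal ((tsd (p i) - Gx i x)^2)) \<partial>PiM {..<n} (\<lambda>_. lborel))
      \<le> ennreal (1 / fact n) * ennreal ((if p i < 2*m then 64 * exp (-16) else 0) + real n * K)" .
  qed
  also have "\<dots> = ennreal ((1 / fact n) * (\<Sum>p\<in>perms n. (if p i < 2*m then 64 * exp (-16) else 0) + real n * K))"
  proof -
    have K0: "K \<ge> 0" by (simp add: K_def)
    have "(\<Sum>p\<in>perms n. ennreal (1 / fact n) * ennreal ((if p i < 2*m then 64 * exp (-16) else 0) + real n * K))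
        = (\<Sum>p\<in>perms n. ennreal ((1 / fact n) * ((if p i < 2*m then 64 * exp (-16) else 0) + real n * K)))"
    proof (intro sum.cong refl)
      fix p
      have "0 \<le> (if p i < 2*m then 64 * exp (-16) else 0) + real n * K" using K0 by simp
      then show "ennreal (1 / fact n) * ennreal ((if p i < 2*m then 64 * exp (-16) else 0) + real n * K)
          = ennreal ((1 / fact n) * ((if p i < 2*m then 64 * exp (-16) else 0) + real n * K))"
        by (intro ennreal_mult[symmetric]) auto
    qed
    also have "\<dots> = ennreal (\<Sum>p\<in>perms n. (1 / fact n) * ((if p i < 2*m then 64 * exp (-16) else 0) + real n * K))"
      using K0 by (subst sum_ennreal) auto
    finally show ?thesis by (simp add: sum_distrib_left)
  qed
  finally show ?thesis .
qed

end

context design begin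

lemma gap_bound:
  shows "S_PI_gap n tsd \<ge> 16 * phi45 * real m - (128 * exp (-16) * real m + real n * real n * K)"
proof -
  let ?M = "perm_gauss_model n tsd"
  interpret ps: prob_space ?M by (rule prob_space_model)
  define th where "th i = theta_rv tsd i" for i
  define S where "S i = theta_S n tsd i" for i
  define P where "P i = theta_PI n tsd i" for i
  define G where "G i (\<omega>::(nat \<Rightarrow> nat) \<times> (nat \<Rightarrow> real)) = Gx i (snd \<omega>)" for i \<omega>
  have key: "(\<integral>\<omega>. (S i \<omega> - P i \<omega>)^2 \<partial>?M) \<ge> (\<integral>\<omega>. (th i \<omega> - S i \<omega>)^2 \<partial>?M) - (\<integral>\<omega>. (th i \<omega> - G i \<omega>)^2 \<partial>?M)"
    and intSP: "integrable ?M (\<lambda>\<omega>. (S i \<omega> - P i \<omega>)^2)" if i: "i < n" for i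
  proof -
    have Sb: "AE \<omega> in ?M. \<bar>S i \<omega>\<bar> \<le> \<mu>"
      unfolding S_def theta_S_def by (rule cond_bound[OF sfs_Xi[OF i] prob_space_model theta_meas]) (rule theta_bd[OF i])
    have Gb: "AE \<omega> in ?M. \<bar>G i \<omega>\<bar> \<le> \<mu>" by (rule AE_I2) (simp add: G_def Gx_bound)
    note P1 = pyth[OF sfs_X prob_space_model theta_meas theta_bd[OF i] thetaS_measX[OF i] Sb[unfolded S_def]]
    note P2 = pyth[OF sfs_X prob_space_model theta_meas theta_bd[OF i] GM_meas(2)[OF i] Gb[unfolded G_def]]
    have eqP: "real_cond_exp ?M (sigma_X n tsd) (theta_rv tsd i) = P i" by (simp add: P_def theta_PI_def)
    have sq: "\<And>\<omega>. (S i \<omega> - P i \<omega>)^2 = (P i \<omega> - S i \<omega>)^2" by (simp add: power2_commute)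
    have n0: "(\<integral>\<omega>. (P i \<omega> - G i \<omega>)^2 \<partial>?M) \<ge> 0" by simp
    show "(\<integral>\<omega>. (S i \<omega> - P i \<omega>)^2 \<partial>?M) \<ge> (\<integral>\<omega>. (th i \<omega> - S i \<omega>)^2 \<partial>?M) - (\<integral>\<omega>. (th i \<omega> - G i \<omega>)^2 \<partial>?M)"
      using P1(1) P2(1) n0 unfolding eqP sq by (simp add: th_def S_def G_def)
    show "integrable ?M (\<lambda>\<omega>. (S i \<omega> - P i \<omega>)^2)" using P1(2) unfolding eqP sq by (simp add: S_def)
  qed
  have gap: "S_PI_gap n tsd = (\<Sum>i<n. \<integral>\<omega>. (S i \<omega> - P i \<omega>)^2 \<partial>?M)"
    unfolding S_PI_gap_def S_def P_def by (rule Bochner_Integration.integral_sum) (use intSP in \<open>auto simp: S_def P_def\<close>)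
  have sepR: "(\<Sum>i<n. \<integral>\<omega>. (th i \<omega> - S i \<omega>)^2 \<partial>?M) \<ge> 16 * phi45 * real m"
  proof -
    have "ennreal (\<Sum>i<n. \<integral>\<omega>. (th i \<omega> - S i \<omega>)^2 \<partial>?M) = (\<Sum>i<n. ennreal (\<integral>\<omega>. (th i \<omega> - S i \<omega>)^2 \<partial>?M))"
      by (rule sum_ennreal[symmetric]) simp
    also have "\<dots> = (\<Sum>i<n. \<Sum>p\<in>perms n. ennreal (1 / fact n) * Hf (\<lambda>t. theta_S n tsd i (emb n i t)) (p i))"
      by (intro sum.cong refl) (simp add: th_def S_def sep_term)
    also have "\<dots> \<ge> ennreal (16 * phi45 * real m)"
    proof (rule sep_total)
      fix i assume i: "i < n"
      have Sg: "theta_S n tsd i \<in> borel_measurable (sigma_Xi n tsd i)" unfolding theta_S_def by simp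
      show "(\<lambda>t. theta_S n tsd i (emb n i t)) \<in> borel_measurable borel" by (rule Xi_represent(1)[OF Sg i])
    qed
    finally show ?thesis by (simp add: ennreal_le_iff sum_nonneg)
  qed
  have piR: "(\<Sum>i<n. \<integral>\<omega>. (th i \<omega> - G i \<omega>)^2 \<partial>?M) \<le> 128 * exp (-16) * real m + real n * real n * K"
  proof -
    have "(\<Sum>i<n. \<integral>\<omega>. (th i \<omega> - G i \<omega>)^2 \<partial>?M) \<le> (\<Sum>i<n. (1 / fact n) * (\<Sum>p\<in>perms n. (if p i < 2*m then 64 * exp (-16) else 0) + real n * K))"
    proof (intro sum_mono)
      fix i assume "i \<in> {..<n}"
      then have i: "i < n" by simp
      have K0: "K \<ge> 0" by (simp add: K_def)
      have "0 \<le> (1 / fact n) * (\<Sum>p\<in>perms n. (if p i < 2*m then 64 * exp (-16) else 0) + real n * K)"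
        using K0 by (intro mult_nonneg_nonneg sum_nonneg) auto
      then show "(\<integral>\<omega>. (th i \<omega> - G i \<omega>)^2 \<partial>?M) \<le> (1 / fact n) * (\<Sum>p\<in>perms n. (if p i < 2*m then 64 * exp (-16) else 0) + real n * K)"
        using pi_term[OF i] by (simp add: th_def G_def ennreal_le_iff)
    qed
    also have "\<dots> = (1 / fact n) * (\<Sum>i<n. \<Sum>p\<in>perms n. (if p i < 2*m then 64 * exp (-16) else 0) + real n * K)"
      by (rule sum_distrib_left[symmetric])
    also have "\<dots> = (1 / fact n) * (\<Sum>p\<in>perms n. \<Sum>i<n. (if p i < 2*m then 64 * exp (-16) else 0) + real n * K)"
      by (subst sum.swap) (rule refl)
    also have "\<dots> = (1 / fact n) * (\<Sum>p\<in>perms n. real (2 * m) * (64 * exp (-16)) + real n * (real n * K))"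
    proof -
      have "(\<Sum>i<n. (if p i < 2*m then 64 * exp (-16) else 0) + real n * K) = real (2 * m) * (64 * exp (-16)) + real n * (real n * K)"
        if "p \<in> perms n" for p
        using count_pairs[of p "64 * exp (-16)"] that by (simp add: sum.distrib perms_def)
      then show ?thesis by simp
    qed
    also have "\<dots> = 128 * exp (-16) * real m + real n * real n * K"
      by (simp add: card_perms)
    finally show ?thesis .
  qed
  have "(\<Sum>i<n. \<integral>\<omega>. (S i \<omega> - P i \<omega>)^2 \<partial>?M) \<ge> (\<Sum>i<n. (\<integral>\<omega>. (th i \<omega> - S i \<omega>)^2 \<partial>?M) - (\<integral>\<omega>. (th i \<omega> - G i \<omega>)^2 \<partial>?M))"
    by (intro sum_mono key) simp
  then show ?thesis using sepR piR gap by (simp add: sum_subtractf)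
qed

end

lemma sqrt2pi_le3: "sqrt (2 * pi) \<le> 3"
proof -
  have "2 * pi \<le> 3^2" using pi_less_4 by simp
  then have "sqrt (2 * pi) \<le> sqrt (3^2)" by (rule real_sqrt_le_mono)
  then show ?thesis by simp
qed

lemma exp_pow_bound:
  assumes "x \<ge> 0"
  shows "(1 + x / real k) ^ k \<le> exp x"
proof (cases "k = 0")
  case True then show ?thesis using assms by simp
next
  case False
  have "1 + x / real k \<le> exp (x / real k)" by (rule exp_ge_add_one_self)
  then have "(1 + x / real k) ^ k \<le> exp (x / real k) ^ k"
    using assms by (intro power_mono) auto
  also have "\<dots> = exp x" using False by (simp add: exp_of_nat_mult[symmetric])
  finally show ?thesis .
qed

lemma num1: "128 * exp (-16) \<le> 8 * normal_density 0 1 (9/2)"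
proof -
  have e: "48 \<le> exp (47/8 :: real)"
  proof -
    have "(1 + (47/8) / real (10::nat)) ^ 10 \<le> exp (47/8 :: real)" by (rule exp_pow_bound) simp
    moreover have "(48::real) \<le> (1 + (47/8) / real (10::nat)) ^ 10" by (simp add: power_divide)
    ultimately show ?thesis by linarith
  qed
  have "16 * sqrt (2 * pi) \<le> exp (47/8)" using sqrt2pi_le3 e by linarith
  then have "16 * sqrt (2 * pi) * exp (-16) \<le> exp (47/8) * exp (-16)" by simp
  also have "exp (47/8) * exp (-16) = exp (-(81/8) :: real)" by (simp add: exp_add[symmetric])
  finally have "16 * sqrt (2 * pi) * exp (-16) \<le> exp (-(81/8))" .
  moreover have "sqrt (2 * pi) > 0" by simp
  ultimately have "16 * exp (-16) \<le> exp (-(81/8)) / sqrt (2 * pi)"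
    by (simp add: field_simps)
  then show ?thesis by (simp add: normal_density_def power2_eq_square)
qed

lemma num2:
  fixes S :: real and n :: nat
  assumes S: "S \<ge> 8" and n: "n > 0" and L: "ln (real n) = S^2"
  shows "real n * real n * (256 * exp (-((3 * S)^2)/2 + 2 * (3 * S) + 2)) \<le> 4 * normal_density 0 1 (9/2)"
proof -
  have rn: "real n = exp (S^2)" using n L by (metis exp_ln of_nat_0_less_iff)
  have "real n * real n * (256 * exp (-((3 * S)^2)/2 + 2 * (3 * S) + 2)) = 256 * exp (-(5/2 * S^2 - 6 * S - 2))"
    unfolding rn by (simp add: exp_add[symmetric] power2_eq_square algebra_simps)
  also have "\<dots> \<le> 256 * exp (- 110)"
  proof -
    have "5/2 * S^2 - 6 * S - 2 \<ge> 110"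
    proof -
      have "S * S \<ge> 8 * S" using S by (intro mult_right_mono) auto
      then show ?thesis using S unfolding power2_eq_square by linarith
    qed
    then show ?thesis by simp
  qed
  also have "\<dots> \<le> 4 * (exp (-(81/8)) / sqrt (2 * pi))"
  proof -
    have e: "192 \<le> exp (98 :: real)"
    proof -
      have "(1 + 98 / real (2::nat)) ^ 2 \<le> exp (98 :: real)" by (rule exp_pow_bound) simp
      moreover have "(192::real) \<le> (1 + 98 / real (2::nat)) ^ 2" by (simp add: power_divide)
      ultimately show ?thesis by linarith
    qed
    have "64 * sqrt (2 * pi) \<le> exp (110 - 81/8 - 15/8)" using e sqrt2pi_le3 by simp
    then have "64 * sqrt (2 * pi) * exp (-110) \<le> exp (110 - 81/8 - 15/8) * exp (-110)" by simp
    also have "exp (110 - 81/8 - 15/8) * exp (-110) = exp (-(81/8) - 15/8 :: real)" by (simp add: exp_add[symmetric])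
    also have "\<dots> \<le> exp (-(81/8))" by simp
    finally have "64 * sqrt (2 * pi) * exp (-110) \<le> exp (-(81/8))" .
    moreover have "sqrt (2 * pi) > 0" by simp
    ultimately show ?thesis by (simp add: field_simps)
  qed
  also have "\<dots> = 4 * normal_density 0 1 (9/2)" by (simp add: normal_density_def power2_eq_square)
  finally show ?thesis .
qed


lemma floor_half: "x \<ge> 1 \<Longrightarrow> real (nat \<lfloor>x\<rfloor>) \<ge> x / 2"
proof -
  assume x: "x \<ge> 1"
  have f0: "\<lfloor>x\<rfloor> \<ge> 1" using x by simp
  have "real (nat \<lfloor>x\<rfloor>) = real_of_int \<lfloor>x\<rfloor>" using f0 by simp
  moreover have "real_of_int \<lfloor>x\<rfloor> > x - 1" by linarith
  moreover have "real_of_int \<lfloor>x\<rfloor> \<ge> 1" using f0 by simp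
  ultimately show ?thesis by linarith
qed

theorem theorem7:
  shows "\<exists>(n0::nat) (c::real). n0 > 0 \<and> c > 0 \<and>
    (\<forall>n \<ge> n0. \<forall>\<mu>::real. \<mu> \<ge> 8 * sqrt (ln (real n)) \<longrightarrow>
      (\<exists>ts :: nat \<Rightarrow> real. (\<forall>i<n. ts i \<in> {-\<mu>..\<mu>}) \<and>
         S_PI_gap n ts \<ge> c * min (\<mu> / sqrt (ln (real n))) (real n)))"
proof -
  define phi where "phi = normal_density 0 1 (9/2)"
  have phi0: "phi > 0" unfolding phi_def by (simp add: normal_density_pos)
  have main: "\<exists>ts :: nat \<Rightarrow> real. (\<forall>i<n. ts i \<in> {-\<mu>..\<mu>}) \<and>
         S_PI_gap n ts \<ge> phi / 4 * min (\<mu> / sqrt (ln (real n))) (real n)"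
    if n: "n \<ge> 2^96" and mu: "\<mu> \<ge> 8 * sqrt (ln (real n))" for n :: nat and \<mu> :: real
  proof -
    define S where "S = sqrt (ln (real n))"
    have npos: "n > 0" using n by (metis gr0I le_zero_eq power_eq_0_iff zero_neq_numeral)
    have n2: "n \<ge> 2" using n by (metis le_trans one_le_numeral one_le_power power_one_right power_increasing zero_less_numeral one_less_numeral_iff semiring_norm(76))
    have L64: "ln (real n) \<ge> 64"
    proof -
      have "real n \<ge> 2^96" using n by (metis numeral_power_le_of_nat_cancel_iff)
      then have "ln (real n) \<ge> ln (2^96)" by (intro ln_mono) auto
      also have "ln ((2::real)^96) = 96 * ln 2" using ln_realpow[of "2::real" 96] by simp
      finally show ?thesis using ln2_ge_two_thirds by linarith
    qed
    have S8: "S \<ge> 8"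
    proof -
      have "sqrt 64 \<le> S" unfolding S_def using L64 by (rule real_sqrt_le_mono)
      moreover have "sqrt (64::real) = 8" by (simp add: real_sqrt_eq_iff)
      ultimately show ?thesis by simp
    qed
    have SL: "S^2 = ln (real n)" unfolding S_def using L64 by simp
    have muS: "\<mu> \<ge> 8 * S" using mu by (simp add: S_def)
    define s where "s = 6 * S + 8"
    define m where "m = min (nat \<lfloor>(2 * \<mu> - 8) / s\<rfloor>) (n div 2)"
    have s_pos: "s > 0" using S8 by (simp add: s_def)
    have s16: "s \<ge> 16" using S8 by (simp add: s_def)
    have s7: "s \<le> 7 * S" using S8 by (simp add: s_def)
    have mu64: "\<mu> \<ge> 64" using muS S8 by linarith
    have x1: "(2 * \<mu> - 8) / s \<ge> \<mu> / (7 * S)"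
    proof -
      have "\<mu> / (7 * S) \<le> \<mu> / s" using s7 s_pos mu64 by (intro divide_left_mono) auto
      also have "\<mu> / s \<le> (2 * \<mu> - 8) / s" using s_pos mu64 by (intro divide_right_mono) auto
      finally show ?thesis .
    qed
    have x1': "\<mu> / (7 * S) \<ge> 1" using muS S8 by (simp add: field_simps)
    have fl: "real (nat \<lfloor>(2 * \<mu> - 8) / s\<rfloor>) \<ge> \<mu> / (14 * S)"
    proof -
      have "real (nat \<lfloor>(2 * \<mu> - 8) / s\<rfloor>) \<ge> ((2 * \<mu> - 8) / s) / 2" using x1 x1' by (intro floor_half) linarith
      moreover have "((2 * \<mu> - 8) / s) / 2 \<ge> (\<mu> / (7 * S)) / 2" using x1 by simp
      moreover have "(\<mu> / (7 * S)) / 2 = \<mu> / (14 * S)" by simp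
      ultimately show ?thesis by (metis order.trans)
    qed
    have fl1: "real (nat \<lfloor>(2 * \<mu> - 8) / s\<rfloor>) \<ge> 1"
    proof -
      have a1: "(2 * \<mu> - 8) / s \<ge> 1" using x1 x1' by linarith
      then have f1: "\<lfloor>(2 * \<mu> - 8) / s\<rfloor> \<ge> 1" by (simp only: one_le_floor)
      then have "real (nat \<lfloor>(2 * \<mu> - 8) / s\<rfloor>) = real_of_int \<lfloor>(2 * \<mu> - 8) / s\<rfloor>" by (intro of_nat_nat) simp
      moreover have "real_of_int \<lfloor>(2 * \<mu> - 8) / s\<rfloor> \<ge> 1" using f1 by simp
      ultimately show ?thesis by simp
    qed
    have dv: "real (n div 2) \<ge> real n / 4" using n2 by linarith
    have dv1: "n div 2 \<ge> 1" using n2 by linarith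
    have m1: "real m \<ge> 1" unfolding m_def using fl1 dv1 by (simp add: min_def)
    have mmin: "real m \<ge> min (\<mu> / S) (real n) / 14"
    proof -
      have a: "\<mu> / (14 * S) = (\<mu> / S) / 14" by simp
      have "min (\<mu> / S) (real n) / 14 \<le> \<mu> / (14 * S)" unfolding a by (simp add: min_def divide_right_mono)
      moreover have "min (\<mu> / S) (real n) / 14 \<le> real n / 4" by (simp add: min_def)
      ultimately show ?thesis unfolding m_def using fl dv by (simp add: min_def)
    qed
    have m2n: "2 * m \<le> n" unfolding m_def by linarith
    have fit: "real m * s + 8 \<le> 2 * \<mu>"
    proof -
      have "real m \<le> real (nat \<lfloor>(2 * \<mu> - 8) / s\<rfloor>)" unfolding m_def by simp
      also have "\<dots> \<le> (2 * \<mu> - 8) / s" using mu64 s_pos by simp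
      finally have "real m * s \<le> ((2 * \<mu> - 8) / s) * s" using s_pos by (intro mult_right_mono) auto
      then show ?thesis using s_pos by simp
    qed
    interpret D: design n m \<mu> s by unfold_locales (use m2n s16 fit in auto)
    have r3: "D.r = 3 * S" unfolding D.r_def by (simp add: s_def field_simps)
    have K: "real n * real n * D.K \<le> 4 * phi"
      unfolding D.K_def r3 phi_def by (rule num2[OF S8 npos SL[symmetric]])
    have e16: "128 * exp (-16) \<le> 8 * phi" unfolding phi_def by (rule num1)
    have gap: "S_PI_gap n D.tsd \<ge> 16 * phi * real m - (128 * exp (-16) * real m + real n * real n * D.K)"
      using D.gap_bound by (simp add: phi_def)
    have "S_PI_gap n D.tsd \<ge> 4 * phi * real m"
    proof -
      have "128 * exp (-16) * real m \<le> 8 * phi * real m" using e16 m1 by (intro mult_right_mono) auto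
      moreover have "real n * real n * D.K \<le> 4 * phi * real m"
      proof -
        have "4 * phi * 1 \<le> 4 * phi * real m" using m1 phi0 by (intro mult_left_mono) auto
        then show ?thesis using K by simp
      qed
      ultimately show ?thesis using gap by linarith
    qed
    moreover have "4 * phi * real m \<ge> phi / 4 * min (\<mu> / sqrt (ln (real n))) (real n)"
    proof -
      define M0 where "M0 = min (\<mu> / S) (real n)"
      have h1: "4 * phi * (M0 / 14) \<le> 4 * phi * real m"
        using mmin phi0 unfolding M0_def by (intro mult_left_mono) auto
      have M00: "M0 \<ge> 0" using muS S8 by (simp add: min_def M0_def)
      have "phi / 4 * M0 = 1/4 * (phi * M0)" by simp
      also have "\<dots> \<le> 2/7 * (phi * M0)" using phi0 M00 by (intro mult_right_mono) auto
      also have "\<dots> = 4 * phi * (M0 / 14)" by simp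
      also have "\<dots> \<le> 4 * phi * real m" by (rule h1)
      finally show ?thesis unfolding M0_def S_def .
    qed
    ultimately have "S_PI_gap n D.tsd \<ge> phi / 4 * min (\<mu> / sqrt (ln (real n))) (real n)" by linarith
    moreover have "\<forall>i<n. D.tsd i \<in> {-\<mu>..\<mu>}" using D.tsd_range by blast
    ultimately show "\<exists>ts :: nat \<Rightarrow> real. (\<forall>i<n. ts i \<in> {-\<mu>..\<mu>}) \<and>
         S_PI_gap n ts \<ge> phi / 4 * min (\<mu> / sqrt (ln (real n))) (real n)" by blast
  qed
  have "(0::nat) < 2^96" by simp
  moreover have "(0::real) < phi / 4" using phi0 by simp
  ultimately show ?thesis using main by blast
qed

end
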